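(* For every $k\ge1$ there exists a clean universal $k$-URA $\mathcal A_k$ over $(\mathbb N;=)$ and the singleton alphabet $\Sigma=\{\sigma\}$ together with a configuration reachable in $\mathcal A_k$ that contains at least $k!$ distinct states with the same location. In particular $N_k\ge k!$.
   Context: Let $\Sigma$ be a finite alphabet; data words are finite sequences in $(\Sigma\times\mathbb N)^*$. Let $\mathbb N_\bot=\mathbb N\cup\{\bot\}$, $\bot$ equal only to itself. Register constraints over registers $\mathcal R$ are Boolean combinations of atoms $t_1=t_2$ with $t_i\in\{\#\}\cup\{r,\dot r:r\in\mathcal R\}$, interpreted on triples $(\mathbf u,d,\mathbf v)$ (current valuation, input datum, next valuation, valuations $\mathcal R\to\mathbb N_\bot$). A $k$-RA over $(\mathbb N;=)$ is $(\mathcal R,\mathcal L,\ell_{init},\mathcal L_{acc},E)$ with $|\mathcal R|=k$, finite locations, finite edges $(\ell,\sigma,\phi,\ell')$ whose constraints contain for each register $r$ a conjunct $\dot r=r$ or $\dot r=\#$. States are $\ell(\mathbf u)$; the initial state is $\ell_{init}$ with all registers $\bot$; $\ell(\mathbf u)\xrightarrow{\sigma,d}\ell'(\mathbf u')$ if some edge $(\ell,\sigma,\phi,\ell')$ has $(\mathbf u,d,\mathbf u')\models\phi$. A word is accepted from a state if some run on it from that state ends in a state with location in $\mathcal L_{acc}$; $L(\mathcal A)$: words accepted from the initial state; universal means $L(\mathcal A)=(\Sigma\times\mathbb N)^*$. A $k$-URA is a $k$-RA where each data word has at most one initialized accepting run. Clean: every reachable state $\ell(u_1,\dots,u_k)$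 accepts some word and no element of $\mathbb N$ occurs in two different components of $(u_1,\dots,u_k)$. A configuration is a set of states; $\mathrm{succ}(C,(\sigma,d))$ is the set of states reachable by one transition on $(\sigma,d)$ from a state in $C$, extended to words; $C$ is reachable if $C=\mathrm{succ}(\{\text{initial state}\},w)$ for some $w$. $N_k$ denotes the supremum, over all clean universal $k$-URA over $(\mathbb N;=)$ and all their reachable configurations $C$, of the maximal number of distinct states in $C$ sharing the same location. *)

theory Defs
  imports Main "HOL-Library.Extended_Nat"
begin

text \<open>Registers of a k-RA are 0,...,k-1; a valuation is a list of length k of
  values in N_bot, encoded as nat option (None = bot).\<close>

type_synonym valuation = "nat option list"

datatype rterm = Dat | Cur nat | Nxt nat
  \<comment> \<open>Dat = input datum #, Cur r = r, Nxt r = dotted r\<close>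

datatype constr = CTrue | CEq rterm rterm | CNot constr
  | CAnd constr constr | COr constr constr

fun tval :: "valuation \<Rightarrow> nat \<Rightarrow> valuation \<Rightarrow> rterm \<Rightarrow> nat option" where
  "tval u d v Dat = Some d"
| "tval u d v (Cur r) = u ! r"
| "tval u d v (Nxt r) = v ! r"

fun sat :: "valuation \<Rightarrow> nat \<Rightarrow> valuation \<Rightarrow> constr \<Rightarrow> bool" where
  "sat u d v CTrue = True"
| "sat u d v (CEq t1 t2) = (tval u d v t1 = tval u d v t2)"
| "sat u d v (CNot p) = (\<not> sat u d v p)"
| "sat u d v (CAnd p q) = (sat u d v p \<and> sat u d v q)"
| "sat u d v (COr p q) = (sat u d v p \<or> sat u d v q)"

fun tregs :: "rterm \<Rightarrow> nat set" where
  "tregs Dat = {}" | "tregs (Cur r) = {r}" | "tregs (Nxt r) = {r}"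

fun cregs :: "constr \<Rightarrow> nat set" where
  "cregs CTrue = {}"
| "cregs (CEq t1 t2) = tregs t1 \<union> tregs t2"
| "cregs (CNot p) = cregs p"
| "cregs (CAnd p q) = cregs p \<union> cregs q"
| "cregs (COr p q) = cregs p \<union> cregs q"

fun conjuncts :: "constr \<Rightarrow> constr set" where
  "conjuncts (CAnd p q) = conjuncts p \<union> conjuncts q"
| "conjuncts p = {p}"

record ('l, 's) ra =
  nregs :: nat
  locs :: "'l set"
  alph :: "'s set"
  linit :: 'l
  lacc :: "'l set"
  edges :: "('l \<times> 's \<times> constr \<times> 'l) set"

definition wf_ra :: "('l, 's) ra \<Rightarrow> bool" where
  "wf_ra A \<longleftrightarrow> finite (locs A) \<and> finite (alph A) \<and> linit A \<in> locs A \<and> lacc A \<subseteq> locs A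
    \<and> finite (edges A)
    \<and> (\<forall>(l, \<sigma>, \<phi>, l') \<in> edges A. l \<in> locs A \<and> \<sigma> \<in> alph A \<and> l' \<in> locs A
         \<and> cregs \<phi> \<subseteq> {..<nregs A}
         \<and> (\<forall>r < nregs A. CEq (Nxt r) (Cur r) \<in> conjuncts \<phi> \<or> CEq (Nxt r) Dat \<in> conjuncts \<phi>))"

type_synonym 'l state = "'l \<times> valuation"

definition init_state :: "('l, 's) ra \<Rightarrow> 'l state" where
  "init_state A = (linit A, replicate (nregs A) None)"

definition is_state :: "('l, 's) ra \<Rightarrow> 'l state \<Rightarrow> bool" where
  "is_state A q \<longleftrightarrow> fst q \<in> locs A \<and> length (snd q) = nregs A"

definition step :: "('l, 's) ra \<Rightarrow> 'l state \<Rightarrow> 's \<times> nat \<Rightarrow> 'l state \<Rightarrow> bool" where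
  "step A q a q' \<longleftrightarrow> is_state A q \<and> is_state A q' \<and>
     (\<exists>\<phi>. (fst q, fst a, \<phi>, fst q') \<in> edges A \<and> sat (snd q) (snd a) (snd q') \<phi>)"

definition words :: "('l, 's) ra \<Rightarrow> ('s \<times> nat) list set" where
  "words A = {w. \<forall>a \<in> set w. fst a \<in> alph A}"

definition is_run :: "('l, 's) ra \<Rightarrow> 'l state \<Rightarrow> ('s \<times> nat) list \<Rightarrow> 'l state list \<Rightarrow> bool" where
  "is_run A q w qs \<longleftrightarrow> length qs = Suc (length w) \<and> qs ! 0 = q
     \<and> (\<forall>i < length w. step A (qs ! i) (w ! i) (qs ! Suc i))"

definition accepting_run :: "('l, 's) ra \<Rightarrow> 'l state \<Rightarrow> ('s \<times> nat) list \<Rightarrow> 'l state list \<Rightarrow> bool" where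
  "accepting_run A q w qs \<longleftrightarrow> is_run A q w qs \<and> fst (last qs) \<in> lacc A"

definition accepts_from :: "('l, 's) ra \<Rightarrow> 'l state \<Rightarrow> ('s \<times> nat) list \<Rightarrow> bool" where
  "accepts_from A q w \<longleftrightarrow> (\<exists>qs. accepting_run A q w qs)"

definition lang :: "('l, 's) ra \<Rightarrow> ('s \<times> nat) list set" where
  "lang A = {w \<in> words A. accepts_from A (init_state A) w}"

definition universal :: "('l, 's) ra \<Rightarrow> bool" where
  "universal A \<longleftrightarrow> lang A = words A"

definition k_RA :: "nat \<Rightarrow> ('l, 's) ra \<Rightarrow> bool" where
  "k_RA k A \<longleftrightarrow> wf_ra A \<and> nregs A = k"

definition unambiguous :: "('l, 's) ra \<Rightarrow> bool" where
  "unambiguous A \<longleftrightarrow> (\<forall>w \<in> words A. \<forall>qs qs'.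
      accepting_run A (init_state A) w qs \<longrightarrow> accepting_run A (init_state A) w qs' \<longrightarrow> qs = qs')"

definition k_URA :: "nat \<Rightarrow> ('l, 's) ra \<Rightarrow> bool" where
  "k_URA k A \<longleftrightarrow> k_RA k A \<and> unambiguous A"

definition reachable_state :: "('l, 's) ra \<Rightarrow> 'l state \<Rightarrow> bool" where
  "reachable_state A q \<longleftrightarrow> (\<exists>w \<in> words A. \<exists>qs. is_run A (init_state A) w qs \<and> last qs = q)"

definition clean :: "('l, 's) ra \<Rightarrow> bool" where
  "clean A \<longleftrightarrow> (\<forall>q. reachable_state A q \<longrightarrow>
      (\<exists>w \<in> words A. accepts_from A q w)
      \<and> (\<forall>i < length (snd q). \<forall>j < length (snd q). \<forall>n::nat.
            i \<noteq> j \<longrightarrow> snd q ! i = Some n \<longrightarrow> snd q ! j \<noteq> Some n))"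

definition succ :: "('l, 's) ra \<Rightarrow> 'l state set \<Rightarrow> 's \<times> nat \<Rightarrow> 'l state set" where
  "succ A C a = {q'. \<exists>q \<in> C. step A q a q'}"

fun succ_word :: "('l, 's) ra \<Rightarrow> 'l state set \<Rightarrow> ('s \<times> nat) list \<Rightarrow> 'l state set" where
  "succ_word A C [] = C"
| "succ_word A C (a # w) = succ_word A (succ A C a) w"

definition reachable_config :: "('l, 's) ra \<Rightarrow> 'l state set \<Rightarrow> bool" where
  "reachable_config A C \<longleftrightarrow> (\<exists>w \<in> words A. C = succ_word A {init_state A} w)"

definition ecard :: "'a set \<Rightarrow> enat" where
  "ecard S = (if finite S then enat (card S) else \<infinity>)"

text \<open>N_k: supremum over clean universal k-URA (locations and letters w.l.o.g. taken
  as finite sets of naturals) and reachable configurations C of the maximal number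
  of states in C with the same location.\<close>
definition N :: "nat \<Rightarrow> enat" where
  "N k = (SUP x \<in> {(A, C, l). k_URA k (A :: (nat, nat) ra) \<and> clean A \<and> universal A
                \<and> reachable_config A C}.
            (case x of (A, C, l) \<Rightarrow> ecard {q \<in> C. fst q = l}))"

end

theory Submission
  imports Defs "HOL-Library.Nat_Bijection" "HOL-Combinatorics.Multiset_Permutations"
begin


lemma accrun_Nil: "accepting_run A q [] qs \<longleftrightarrow> qs = [q] \<and> fst q \<in> lacc A"
proof -
  have "accepting_run A q [] qs \<Longrightarrow> qs = [q]"
    by (cases qs) (auto simp: accepting_run_def is_run_def)
  then show ?thesis by (cases qs) (auto simp: accepting_run_def is_run_def)
qed

lemma acc_Nil: "accepts_from A q [] \<longleftrightarrow> fst q \<in> lacc A"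
  by (auto simp: accepts_from_def accrun_Nil)

lemma accrun_Cons: "accepting_run A q (a#w) qs \<longleftrightarrow>
   (\<exists>q' qs'. qs = q#qs' \<and> step A q a q' \<and> accepting_run A q' w qs')"
proof (rule iffI)
  assume a: "accepting_run A q (a#w) qs"
  then have l: "length qs = Suc (Suc (length w))" and h: "qs ! 0 = q"
    and st: "\<forall>i<Suc (length w). step A (qs ! i) ((a#w) ! i) (qs ! Suc i)"
    and la: "fst (last qs) \<in> lacc A"
    by (auto simp: accepting_run_def is_run_def)
  obtain qs' where qs: "qs = q # qs'" using l h by (cases qs) auto
  have ne: "qs' \<noteq> []" using l qs by auto
  have s0: "step A q a (qs' ! 0)" using st[rule_format, of 0] qs by auto
  have l': "length qs' = Suc (length w)" using l qs by auto
  have st': "\<forall>i<length w. step A (qs' ! i) (w ! i) (qs' ! Suc i)"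
    using st qs by auto
  have la': "fst (last qs') \<in> lacc A" using la qs ne by auto
  have "accepting_run A (qs'!0) w qs'"
    unfolding accepting_run_def is_run_def using l' st' la' by auto
  then show "\<exists>q' qs'. qs = q#qs' \<and> step A q a q' \<and> accepting_run A q' w qs'"
    using qs s0 by blast
next
  assume "\<exists>q' qs'. qs = q#qs' \<and> step A q a q' \<and> accepting_run A q' w qs'"
  then obtain q' qs' where qs: "qs = q#qs'" and s: "step A q a q'" and r: "accepting_run A q' w qs'"
    by blast
  from r have l: "length qs' = Suc (length w)" and h: "qs' ! 0 = q'"
    and st: "\<forall>i<length w. step A (qs' ! i) (w ! i) (qs' ! Suc i)"
    and la: "fst (last qs') \<in> lacc A"
    by (auto simp: accepting_run_def is_run_def)
  have ne: "qs' \<noteq> []" using l by auto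
  have st2: "\<forall>i<length (a#w). step A (qs ! i) ((a#w) ! i) (qs ! Suc i)"
  proof (intro allI impI)
    fix i assume i: "i < length (a#w)"
    show "step A (qs ! i) ((a#w) ! i) (qs ! Suc i)"
    proof (cases i)
      case 0 then show ?thesis using qs s h by auto
    next
      case (Suc j) then show ?thesis using qs st i by auto
    qed
  qed
  show "accepting_run A q (a#w) qs"
    unfolding accepting_run_def is_run_def using st2 l qs la ne by auto
qed

lemma acc_Cons: "accepts_from A q (a#w) \<longleftrightarrow> (\<exists>q'. step A q a q' \<and> accepts_from A q' w)"
  by (auto simp: accepts_from_def accrun_Cons)

lemma run_inv:
  assumes "I q0" "\<And>q a q'. I q \<Longrightarrow> fst a \<in> alph A \<Longrightarrow> step A q a q' \<Longrightarrow> I q'"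
    "is_run A q0 w qs" "w \<in> words A"
  shows "\<forall>i\<le>length w. I (qs!i)"
proof (intro allI impI)
  fix i assume "i \<le> length w"
  then show "I (qs ! i)"
  proof (induction i)
    case 0 then show ?case using assms(1,3) by (auto simp: is_run_def)
  next
    case (Suc i)
    then have "I (qs ! i)" by auto
    moreover have "step A (qs ! i) (w ! i) (qs ! Suc i)" using assms(3) Suc.prems by (auto simp: is_run_def)
    moreover have "fst (w ! i) \<in> alph A" using assms(4) Suc.prems by (auto simp: words_def)
    ultimately show ?case using assms(2) by blast
  qed
qed

lemma reach_inv:
  assumes "I (init_state A)" "\<And>q a q'. I q \<Longrightarrow> fst a \<in> alph A \<Longrightarrow> step A q a q' \<Longrightarrow> I q'"
    "reachable_state A q"
  shows "I q"
proof -
  obtain w qs where w: "w \<in> words A" and r: "is_run A (init_state A) w qs" and l: "last qs = q"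
    using assms(3) by (auto simp: reachable_state_def)
  have "\<forall>i\<le>length w. I (qs!i)" using run_inv[where I=I, OF assms(1) _ r w] assms(2) by blast
  moreover have "last qs = qs ! length w"
  proof -
    have "length qs = Suc (length w)" using r by (simp add: is_run_def)
    then show ?thesis by (metis last_conv_nth list.size(3) nat.distinct(1) diff_Suc_1)
  qed
  ultimately show ?thesis using l by auto
qed

lemma uniq_runs:
  assumes pres: "\<And>q a q'. I q \<Longrightarrow> fst a \<in> alph A \<Longrightarrow> step A q a q' \<Longrightarrow> I q'"
    and det: "\<And>q a q1 q2 w. I q \<Longrightarrow> fst a \<in> alph A \<Longrightarrow> step A q a q1 \<Longrightarrow> step A q a q2
              \<Longrightarrow> accepts_from A q1 w \<Longrightarrow> accepts_from A q2 w \<Longrightarrow> q1 = q2"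
  shows "I q \<Longrightarrow> w \<in> words A \<Longrightarrow> accepting_run A q w qs \<Longrightarrow> accepting_run A q w qs' \<Longrightarrow> qs = qs'"
proof (induction w arbitrary: q qs qs')
  case Nil then show ?case by (auto simp: accrun_Nil)
next
  case (Cons a w)
  from Cons.prems(3) obtain q1 qs1 where 1: "qs = q#qs1" "step A q a q1" "accepting_run A q1 w qs1"
    by (auto simp: accrun_Cons)
  from Cons.prems(4) obtain q2 qs2 where 2: "qs' = q#qs2" "step A q a q2" "accepting_run A q2 w qs2"
    by (auto simp: accrun_Cons)
  have al: "fst a \<in> alph A" "w \<in> words A" using Cons.prems(2) by (auto simp: words_def)
  have "q1 = q2" using det[OF Cons.prems(1) al(1) 1(2) 2(2)] 1(3) 2(3) by (auto simp: accepts_from_def)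
  moreover have "I q1" using pres[OF Cons.prems(1) al(1) 1(2)] .
  ultimately show ?case using Cons.IH[OF _ al(2) 1(3)] 2(3) 1(1) 2(1) by auto
qed

lemma succ_word_snoc: "succ_word A C (w @ [a]) = succ A (succ_word A C w) a"
  by (induction w arbitrary: C) auto

fun cands :: "constr list \<Rightarrow> constr" where
  "cands [] = CTrue" | "cands (c#cs) = CAnd c (cands cs)"

lemma sat_cands: "sat u d v (cands cs) \<longleftrightarrow> (\<forall>c\<in>set cs. sat u d v c)"
  by (induction cs) auto

lemma sat_cands_map: "sat u d v (cands (map f xs)) \<longleftrightarrow> (\<forall>x\<in>set xs. sat u d v (f x))"
  by (induction xs) auto

lemma cregs_cands: "cregs (cands cs) = (\<Union>c\<in>set cs. cregs c)"
  by (induction cs) auto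

lemma conj_cands: "(\<forall>c\<in>set cs. conjuncts c = {c}) \<Longrightarrow> set cs \<subseteq> conjuncts (cands cs)"
  by (induction cs) auto

definition fresh :: "nat \<Rightarrow> constr" where
  "fresh k = cands (map (\<lambda>s. CNot (CEq Dat (Cur s))) [0..<k])"
definition ld :: "nat \<Rightarrow> nat \<Rightarrow> constr" where
  "ld k r = cands (map (\<lambda>s. if s = r then CEq (Nxt s) Dat else CEq (Nxt s) (Cur s)) [0..<k])"
abbreviation keep :: "nat \<Rightarrow> constr" where "keep k \<equiv> ld k k"

lemma sat_fresh: "sat u d v (fresh k) \<longleftrightarrow> (\<forall>s<k. u!s \<noteq> Some d)"
  unfolding fresh_def sat_cands_map by (auto simp: eq_commute[of "Some d"])

lemma sat_ld_aux: "sat u d v (if s = r then CEq (Nxt s) Dat else CEq (Nxt s) (Cur s)) = (v!s = (if s = r then Some d else u!s))"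
  by simp

lemma sat_ld0: "sat u d v (ld k r) \<longleftrightarrow> (\<forall>s<k. v!s = (if s = r then Some d else u!s))"
  unfolding ld_def sat_cands_map sat_ld_aux by (simp add: Ball_def)

lemma sat_ld: assumes "length u = k" "length v = k"
  shows "sat u d v (ld k r) \<longleftrightarrow> v = u[r := Some d]"
  unfolding sat_ld0
proof
  assume H: "\<forall>s<k. v!s = (if s=r then Some d else u!s)"
  show "v = u[r:=Some d]"
  proof (rule nth_equalityI)
    show "length v = length (u[r := Some d])" using assms by simp
    fix i assume "i < length v"
    then have "i < k" using assms by simp
    have e: "v!i = (if i = r then Some d else u!i)" using H \<open>i<k\<close> by blast
    have "u[r:=Some d]!i = (if r = i then Some d else u!i)" using \<open>i<k\<close> assms(1) by (simp add: nth_list_update)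
    then show "v!i = u[r:=Some d]!i" using e by auto
  qed
next
  assume "v = u[r:=Some d]"
  show "\<forall>s<k. v!s = (if s=r then Some d else u!s)"
  proof (intro allI impI)
    fix s assume "s < k"
    then have "u[r:=Some d]!s = (if r = s then Some d else u!s)" using assms(1) by (simp add: nth_list_update)
    then show "v!s = (if s=r then Some d else u!s)" using \<open>v = u[r:=Some d]\<close> by auto
  qed
qed

lemma sat_keep: "length u = k \<Longrightarrow> length v = k \<Longrightarrow> sat u d v (keep k) \<longleftrightarrow> v = u"
  by (simp add: sat_ld list_update_beyond)

lemma cregs_fresh: "cregs (fresh k) \<subseteq> {..<k}"
  by (auto simp: fresh_def cregs_cands)
lemma cregs_ld: "cregs (ld k r) \<subseteq> {..<k}"
  by (auto simp: ld_def cregs_cands split: if_splits)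
lemma conj_ld: "s < k \<Longrightarrow> CEq (Nxt s) (Cur s) \<in> conjuncts (ld k r) \<or> CEq (Nxt s) Dat \<in> conjuncts (ld k r)"
proof -
  let ?cs = "map (\<lambda>s. if s = r then CEq (Nxt s) Dat else CEq (Nxt s) (Cur s)) [0..<k]"
  have "set ?cs \<subseteq> conjuncts (cands ?cs)" by (rule conj_cands) auto
  moreover assume "s < k"
  ultimately show ?thesis by (cases "s = r") (auto simp: ld_def)
qed



section \<open>Locations\<close>

definition Rl :: "nat \<Rightarrow> nat" where "Rl i = 5*i"
definition Ql :: "nat set \<Rightarrow> nat" where "Ql S = 5*set_encode S + 1"
definition Vl :: "nat \<Rightarrow> nat" where "Vl j = 5*j + 2"
definition Cl :: "nat set \<Rightarrow> nat" where "Cl S = 5*set_encode S + 3"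
definition Sk :: nat where "Sk = 4"

lemma Rl_inj[simp]: "Rl i = Rl j \<longleftrightarrow> i = j" by (simp add: Rl_def)
lemma Vl_inj[simp]: "Vl i = Vl j \<longleftrightarrow> i = j" by (simp add: Vl_def)
lemma Ql_inj[simp]: "finite S \<Longrightarrow> finite T \<Longrightarrow> Ql S = Ql T \<longleftrightarrow> S = T"
  by (simp add: Ql_def set_encode_eq)
lemma Cl_inj[simp]: "finite S \<Longrightarrow> finite T \<Longrightarrow> Cl S = Cl T \<longleftrightarrow> S = T"
  by (simp add: Cl_def set_encode_eq)

lemma loc_dist[simp]:
  "Rl i \<noteq> Ql S" "Ql S \<noteq> Rl i" "Rl i \<noteq> Vl j" "Vl j \<noteq> Rl i" "Rl i \<noteq> Cl S" "Cl S \<noteq> Rl i"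
  "Rl i \<noteq> Sk" "Sk \<noteq> Rl i" "Ql S \<noteq> Vl j" "Vl j \<noteq> Ql S" "Ql S \<noteq> Cl T" "Cl T \<noteq> Ql S"
  "Ql S \<noteq> Sk" "Sk \<noteq> Ql S" "Vl j \<noteq> Cl S" "Cl S \<noteq> Vl j" "Vl j \<noteq> Sk" "Sk \<noteq> Vl j"
  "Cl S \<noteq> Sk" "Sk \<noteq> Cl S"
  by (simp_all add: Rl_def Ql_def Vl_def Cl_def Sk_def, presburger+)

definition src :: "nat \<Rightarrow> nat set \<Rightarrow> nat" where "src k S = (if S = {} then Rl 0 else Ql S)"
definition vsrc :: "nat \<Rightarrow> nat \<Rightarrow> nat" where "vsrc k j = (if j = 0 then Ql {..<k} else Vl j)"
definition nextR :: "nat \<Rightarrow> nat \<Rightarrow> nat" where "nextR k i = (if Suc i = k then Cl {} else Rl (Suc i))"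

definition "P1 k = (\<lambda>i. (Rl i, 0::nat, CAnd (fresh k) (ld k i), nextR k i)) ` {..<k}"
definition "P2 k = (\<lambda>i. (Rl i, 0::nat, CAnd (CNot (fresh k)) (keep k), Sk)) ` {..<k}"
definition "P3 k = (\<lambda>(S,r). (src k S, 0::nat, CAnd (fresh k) (ld k r), Ql (insert r S))) ` {(S,r). S \<subseteq> {..<k} \<and> r < k \<and> r \<notin> S}"
definition "P4 k = (\<lambda>j. (vsrc k j, 0::nat, CAnd (CEq Dat (Cur j)) (keep k), Vl (Suc j))) ` {..<k}"
definition "P5 k = (\<lambda>(S,r). (Cl S, 0::nat, CAnd (CEq Dat (Cur r)) (keep k), Cl (insert r S))) ` {(S,r). S \<subseteq> {..<k} \<and> r < k \<and> r \<notin> S}"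
definition "P6 k = (\<lambda>(S,r). (Cl S, 0::nat, CAnd (CEq Dat (Cur r)) (keep k), Sk)) ` {(S,r). S \<subseteq> {..<k} \<and> S \<noteq> {..<k} \<and> r \<in> S}"
definition "P7 k = (\<lambda>S. (Cl S, 0::nat, CAnd (fresh k) (keep k), Sk)) ` {S. S \<subseteq> {..<k} \<and> S \<noteq> {..<k}}"
definition "P8 k = {(Cl {..<k}, 0::nat, keep k, Sk), (Sk, 0, keep k, Sk)}"

lemma P1_mem: "(l,a,\<phi>,l') \<in> P1 k \<longleftrightarrow> a = 0 \<and> (\<exists>i<k. l = Rl i \<and> \<phi> = CAnd (fresh k) (ld k i) \<and> l' = nextR k i)"
  by (auto simp: P1_def)
lemma P2_mem: "(l,a,\<phi>,l') \<in> P2 k \<longleftrightarrow> a = 0 \<and> (\<exists>i<k. l = Rl i \<and> \<phi> = CAnd (CNot (fresh k)) (keep k) \<and> l' = Sk)"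
  by (auto simp: P2_def)
lemma P3_mem: "(l,a,\<phi>,l') \<in> P3 k \<longleftrightarrow> a = 0 \<and> (\<exists>S r. S \<subseteq> {..<k} \<and> r < k \<and> r \<notin> S \<and> l = src k S \<and> \<phi> = CAnd (fresh k) (ld k r) \<and> l' = Ql (insert r S))"
  by (auto simp: P3_def image_iff)
lemma P4_mem: "(l,a,\<phi>,l') \<in> P4 k \<longleftrightarrow> a = 0 \<and> (\<exists>j<k. l = vsrc k j \<and> \<phi> = CAnd (CEq Dat (Cur j)) (keep k) \<and> l' = Vl (Suc j))"
  by (auto simp: P4_def)
lemma P5_mem: "(l,a,\<phi>,l') \<in> P5 k \<longleftrightarrow> a = 0 \<and> (\<exists>S r. S \<subseteq> {..<k} \<and> r < k \<and> r \<notin> S \<and> l = Cl S \<and> \<phi> = CAnd (CEq Dat (Cur r)) (keep k) \<and> l' = Cl (insert r S))"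
  by (auto simp: P5_def image_iff)
lemma P6_mem: "(l,a,\<phi>,l') \<in> P6 k \<longleftrightarrow> a = 0 \<and> (\<exists>S r. S \<subseteq> {..<k} \<and> S \<noteq> {..<k} \<and> r \<in> S \<and> l = Cl S \<and> \<phi> = CAnd (CEq Dat (Cur r)) (keep k) \<and> l' = Sk)"
  by (auto simp: P6_def image_iff)
lemma P7_mem: "(l,a,\<phi>,l') \<in> P7 k \<longleftrightarrow> a = 0 \<and> (\<exists>S. S \<subseteq> {..<k} \<and> S \<noteq> {..<k} \<and> l = Cl S \<and> \<phi> = CAnd (fresh k) (keep k) \<and> l' = Sk)"
  by (auto simp: P7_def image_iff)
lemma P8_mem: "(l,a,\<phi>,l') \<in> P8 k \<longleftrightarrow> a = 0 \<and> \<phi> = keep k \<and> l' = Sk \<and> (l = Cl {..<k} \<or> l = Sk)"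
  by (auto simp: P8_def)

definition EDG :: "nat \<Rightarrow> (nat \<times> nat \<times> constr \<times> nat) set" where
  "EDG k = P1 k \<union> P2 k \<union> P3 k \<union> P4 k \<union> P5 k \<union> P6 k \<union> P7 k \<union> P8 k"

lemma EDG_mem: "e \<in> EDG k \<longleftrightarrow> e \<in> P1 k \<or> e \<in> P2 k \<or> e \<in> P3 k \<or> e \<in> P4 k \<or> e \<in> P5 k \<or> e \<in> P6 k \<or> e \<in> P7 k \<or> e \<in> P8 k"
  by (simp add: EDG_def)

lemma src_eqs[simp]:
  "src k S = Rl i \<longleftrightarrow> S = {} \<and> i = 0"
  "src k S \<noteq> Vl j" "src k S \<noteq> Cl T" "src k S \<noteq> Sk"
  by (auto simp: src_def)
lemma src_eq_Q[simp]: "finite S \<Longrightarrow> finite T \<Longrightarrow> src k S = Ql T \<longleftrightarrow> S \<noteq> {} \<and> S = T"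
  by (auto simp: src_def)
lemma vsrc_eqs[simp]:
  "vsrc k j \<noteq> Rl i" "vsrc k j \<noteq> Cl T" "vsrc k j \<noteq> Sk"
  "vsrc k j = Vl j' \<longleftrightarrow> j \<noteq> 0 \<and> j = j'"
  by (auto simp: vsrc_def)
lemma vsrc_eq_Q[simp]: "finite T \<Longrightarrow> vsrc k j = Ql T \<longleftrightarrow> j = 0 \<and> T = {..<k}"
  by (auto simp: vsrc_def)
lemma src_eqs'[simp]:
  "Rl i = src k S \<longleftrightarrow> S = {} \<and> i = 0"
  "Vl j \<noteq> src k S" "Cl T \<noteq> src k S" "Sk \<noteq> src k S"
  by (auto simp: src_def)
lemma src_eq_Q'[simp]: "finite S \<Longrightarrow> finite T \<Longrightarrow> Ql T = src k S \<longleftrightarrow> S \<noteq> {} \<and> S = T"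
  by (auto simp: src_def)
lemma vsrc_eqs'[simp]:
  "Rl i \<noteq> vsrc k j" "Cl T \<noteq> vsrc k j" "Sk \<noteq> vsrc k j"
  "Vl j' = vsrc k j \<longleftrightarrow> j \<noteq> 0 \<and> j = j'"
  by (auto simp: vsrc_def)
lemma vsrc_eq_Q'[simp]: "finite T \<Longrightarrow> Ql T = vsrc k j \<longleftrightarrow> j = 0 \<and> T = {..<k}"
  by (auto simp: vsrc_def)

definition LOCS :: "nat \<Rightarrow> nat set" where
  "LOCS k = Rl ` {..<k} \<union> Ql ` (Pow {..<k} - {{}}) \<union> Vl ` {1..k} \<union> Cl ` Pow {..<k} \<union> {Sk}"
definition LACC :: "nat \<Rightarrow> nat set" where
  "LACC k = Rl ` {..<k} \<union> {Vl k} \<union> Cl ` (Pow {..<k} - {{..<k}}) \<union> {Sk}"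

definition aut :: "nat \<Rightarrow> (nat, nat) ra" where
  "aut k = \<lparr>nregs = k, locs = LOCS k, alph = {0}, linit = Rl 0, lacc = LACC k, edges = EDG k\<rparr>"

lemma aut_simps[simp]: "nregs (aut k) = k" "locs (aut k) = LOCS k" "alph (aut k) = {0}"
  "linit (aut k) = Rl 0" "lacc (aut k) = LACC k" "edges (aut k) = EDG k"
  by (simp_all add: aut_def)

lemma fin_sub: fixes k :: nat assumes "S \<subseteq> {..<k}" shows "finite S"
  using assms by (rule finite_subset) simp

lemmas Pmems = EDG_mem P1_mem P2_mem P3_mem P4_mem P5_mem P6_mem P7_mem P8_mem

lemma E1: "i<k \<Longrightarrow> (Rl i, 0, CAnd (fresh k) (ld k i), nextR k i) \<in> EDG k"
  unfolding EDG_mem by (simp add: P1_mem)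
lemma E2: "i<k \<Longrightarrow> (Rl i, 0, CAnd (CNot (fresh k)) (keep k), Sk) \<in> EDG k"
  unfolding EDG_mem by (simp add: P2_mem)
lemma E3: assumes "S \<subseteq> {..<k}" "r<k" "r\<notin>S"
  shows "(src k S, 0, CAnd (fresh k) (ld k r), Ql (insert r S)) \<in> EDG k"
proof -
  have "(src k S, 0, CAnd (fresh k) (ld k r), Ql (insert r S)) \<in> P3 k"
    unfolding P3_mem using assms by blast
  then show ?thesis unfolding EDG_mem by simp
qed
lemma E4: "j<k \<Longrightarrow> (vsrc k j, 0, CAnd (CEq Dat (Cur j)) (keep k), Vl (Suc j)) \<in> EDG k"
  unfolding EDG_mem by (simp add: P4_mem)
lemma E5: assumes "S \<subseteq> {..<k}" "r<k" "r\<notin>S"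
  shows "(Cl S, 0, CAnd (CEq Dat (Cur r)) (keep k), Cl (insert r S)) \<in> EDG k"
proof -
  have "(Cl S, 0, CAnd (CEq Dat (Cur r)) (keep k), Cl (insert r S)) \<in> P5 k"
    unfolding P5_mem using assms by blast
  then show ?thesis unfolding EDG_mem by simp
qed
lemma E6: assumes "S \<subseteq> {..<k}" "S \<noteq> {..<k}" "r\<in>S"
  shows "(Cl S, 0, CAnd (CEq Dat (Cur r)) (keep k), Sk) \<in> EDG k"
proof -
  have "(Cl S, 0, CAnd (CEq Dat (Cur r)) (keep k), Sk) \<in> P6 k"
    unfolding P6_mem using assms by blast
  then show ?thesis unfolding EDG_mem by simp
qed
lemma E7: assumes "S \<subseteq> {..<k}" "S \<noteq> {..<k}"
  shows "(Cl S, 0, CAnd (fresh k) (keep k), Sk) \<in> EDG k"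
proof -
  have "(Cl S, 0, CAnd (fresh k) (keep k), Sk) \<in> P7 k"
    unfolding P7_mem using assms by blast
  then show ?thesis unfolding EDG_mem by simp
qed
lemma E8: "(Cl {..<k}, 0, keep k, Sk) \<in> EDG k" "(Sk, 0, keep k, Sk) \<in> EDG k"
  unfolding EDG_mem by (simp_all add: P8_mem)

lemma edge_R: "(Rl i, a, \<phi>, l') \<in> EDG k \<longleftrightarrow> i < k \<and> a = 0 \<and>
   ((\<phi> = CAnd (fresh k) (ld k i) \<and> l' = nextR k i)
  \<or> (\<phi> = CAnd (CNot (fresh k)) (keep k) \<and> l' = Sk)
  \<or> (i = 0 \<and> (\<exists>r<k. \<phi> = CAnd (fresh k) (ld k r) \<and> l' = Ql {r})))"
proof
  assume "(Rl i, a, \<phi>, l') \<in> EDG k"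
  then show "i < k \<and> a = 0 \<and>
   ((\<phi> = CAnd (fresh k) (ld k i) \<and> l' = nextR k i)
  \<or> (\<phi> = CAnd (CNot (fresh k)) (keep k) \<and> l' = Sk)
  \<or> (i = 0 \<and> (\<exists>r<k. \<phi> = CAnd (fresh k) (ld k r) \<and> l' = Ql {r})))"
    unfolding EDG_mem by (elim disjE) (auto simp: P1_mem P2_mem P3_mem P4_mem P5_mem P6_mem P7_mem P8_mem)
next
  have e3: "r < k \<Longrightarrow> (Rl 0, 0, CAnd (fresh k) (ld k r), Ql {r}) \<in> EDG k" for r
    using E3[of "{}" k r] by (simp add: src_def)
  assume "i < k \<and> a = 0 \<and>
   ((\<phi> = CAnd (fresh k) (ld k i) \<and> l' = nextR k i)
  \<or> (\<phi> = CAnd (CNot (fresh k)) (keep k) \<and> l' = Sk)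
  \<or> (i = 0 \<and> (\<exists>r<k. \<phi> = CAnd (fresh k) (ld k r) \<and> l' = Ql {r})))"
  then show "(Rl i, a, \<phi>, l') \<in> EDG k" using E1 E2 e3 by auto
qed

lemma edge_Q: assumes "S \<subseteq> {..<k}" "S \<noteq> {}"
  shows "(Ql S, a, \<phi>, l') \<in> EDG k \<longleftrightarrow> a = 0 \<and>
   ((\<exists>r<k. r \<notin> S \<and> \<phi> = CAnd (fresh k) (ld k r) \<and> l' = Ql (insert r S))
  \<or> (S = {..<k} \<and> \<phi> = CAnd (CEq Dat (Cur 0)) (keep k) \<and> l' = Vl 1))"
proof -
  have f: "finite S" using assms fin_sub by blast
  have 1: "\<And>S'. S' \<subseteq> {..<k} \<Longrightarrow> Ql S = src k S' \<longleftrightarrow> S' = S"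
    using f assms(2) by (auto simp: fin_sub)
  have i3: "r<k \<Longrightarrow> r \<notin> S \<Longrightarrow> (Ql S, 0, CAnd (fresh k) (ld k r), Ql (insert r S)) \<in> EDG k" for r
    using E3[of S k r] assms by (simp add: src_def)
  have i4: "S = {..<k} \<Longrightarrow> (Ql S, 0, CAnd (CEq Dat (Cur 0)) (keep k), Vl 1) \<in> EDG k"
    using E4[of 0 k] assms by (auto simp: vsrc_def)
  show ?thesis
  proof
    assume "(Ql S, a, \<phi>, l') \<in> EDG k"
    then show "a = 0 \<and>
   ((\<exists>r<k. r \<notin> S \<and> \<phi> = CAnd (fresh k) (ld k r) \<and> l' = Ql (insert r S))
  \<or> (S = {..<k} \<and> \<phi> = CAnd (CEq Dat (Cur 0)) (keep k) \<and> l' = Vl 1))"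
      unfolding EDG_mem using 1 f by (elim disjE) (auto simp: P1_mem P2_mem P3_mem P4_mem P5_mem P6_mem P7_mem P8_mem)
  qed (use i3 i4 in auto)
qed

lemma edge_V: assumes "j \<ge> 1"
  shows "(Vl j, a, \<phi>, l') \<in> EDG k \<longleftrightarrow> a = 0 \<and> j < k \<and> \<phi> = CAnd (CEq Dat (Cur j)) (keep k) \<and> l' = Vl (Suc j)"
proof
  assume "(Vl j, a, \<phi>, l') \<in> EDG k"
  then show "a = 0 \<and> j < k \<and> \<phi> = CAnd (CEq Dat (Cur j)) (keep k) \<and> l' = Vl (Suc j)"
    using assms unfolding EDG_mem by (elim disjE) (auto simp: P1_mem P2_mem P3_mem P4_mem P5_mem P6_mem P7_mem P8_mem)
next
  assume "a = 0 \<and> j < k \<and> \<phi> = CAnd (CEq Dat (Cur j)) (keep k) \<and> l' = Vl (Suc j)"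
  then show "(Vl j, a, \<phi>, l') \<in> EDG k" using E4[of j k] assms by (auto simp: vsrc_def)
qed

lemma edge_C: assumes "S \<subseteq> {..<k}"
  shows "(Cl S, a, \<phi>, l') \<in> EDG k \<longleftrightarrow> a = 0 \<and>
   ((\<exists>r<k. r \<notin> S \<and> \<phi> = CAnd (CEq Dat (Cur r)) (keep k) \<and> l' = Cl (insert r S))
  \<or> (S \<noteq> {..<k} \<and> (\<exists>r\<in>S. \<phi> = CAnd (CEq Dat (Cur r)) (keep k) \<and> l' = Sk))
  \<or> (S \<noteq> {..<k} \<and> \<phi> = CAnd (fresh k) (keep k) \<and> l' = Sk)
  \<or> (S = {..<k} \<and> \<phi> = keep k \<and> l' = Sk))"
proof -
  have f: "finite S" using assms fin_sub by blast
  have 1: "\<And>S'. S' \<subseteq> {..<k} \<Longrightarrow> Cl S = Cl S' \<longleftrightarrow> S' = S"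
    using f by (auto simp: fin_sub)
  have 2: "Cl S = Cl {..<k} \<longleftrightarrow> S = {..<k}" using f by auto
  show ?thesis
  proof
    assume "(Cl S, a, \<phi>, l') \<in> EDG k"
    then show "a = 0 \<and>
   ((\<exists>r<k. r \<notin> S \<and> \<phi> = CAnd (CEq Dat (Cur r)) (keep k) \<and> l' = Cl (insert r S))
  \<or> (S \<noteq> {..<k} \<and> (\<exists>r\<in>S. \<phi> = CAnd (CEq Dat (Cur r)) (keep k) \<and> l' = Sk))
  \<or> (S \<noteq> {..<k} \<and> \<phi> = CAnd (fresh k) (keep k) \<and> l' = Sk)
  \<or> (S = {..<k} \<and> \<phi> = keep k \<and> l' = Sk))"
      unfolding EDG_mem using 1 2 by (elim disjE) (auto simp: P1_mem P2_mem P3_mem P4_mem P5_mem P6_mem P7_mem P8_mem)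
  qed (use E5[OF assms] E6[OF assms] E7[OF assms] E8 in auto)
qed

lemma edge_Sk: "(Sk, a, \<phi>, l') \<in> EDG k \<longleftrightarrow> a = 0 \<and> \<phi> = keep k \<and> l' = Sk"
proof
  assume "(Sk, a, \<phi>, l') \<in> EDG k"
  then show "a = 0 \<and> \<phi> = keep k \<and> l' = Sk" unfolding EDG_mem by (elim disjE) (auto simp: P1_mem P2_mem P3_mem P4_mem P5_mem P6_mem P7_mem P8_mem)
qed (use E8 in auto)



lemma LOCS_intros:
  "i < k \<Longrightarrow> Rl i \<in> LOCS k"
  "S \<subseteq> {..<k} \<Longrightarrow> S \<noteq> {} \<Longrightarrow> Ql S \<in> LOCS k"
  "1 \<le> j \<Longrightarrow> j \<le> k \<Longrightarrow> Vl j \<in> LOCS k"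
  "S \<subseteq> {..<k} \<Longrightarrow> Cl S \<in> LOCS k"
  "Sk \<in> LOCS k"
  "i < k \<Longrightarrow> nextR k i \<in> LOCS k"
  by (auto simp: LOCS_def nextR_def)

lemma step_aut: "step (aut k) (l,u) (a,d) (l',v) \<longleftrightarrow> l \<in> LOCS k \<and> length u = k \<and> l' \<in> LOCS k \<and> length v = k
   \<and> (\<exists>\<phi>. (l,a,\<phi>,l') \<in> EDG k \<and> sat u d v \<phi>)"
  by (auto simp: step_def is_state_def)

definition nofresh :: "nat \<Rightarrow> nat option list \<Rightarrow> nat \<Rightarrow> bool" where
  "nofresh k u d \<longleftrightarrow> (\<exists>s<k. u!s = Some d)"

lemma step_R: assumes "i<k" "length u = k"
  shows "step (aut k) (Rl i, u) (a,d) (l',v) \<longleftrightarrow> a = 0 \<and> (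
     (\<not> nofresh k u d \<and> l' = nextR k i \<and> v = u[i:=Some d])
   \<or> (nofresh k u d \<and> l' = Sk \<and> v = u)
   \<or> (i = 0 \<and> \<not> nofresh k u d \<and> (\<exists>r<k. l' = Ql {r} \<and> v = u[r:=Some d])))"
proof -
  have 1: "r<k \<Longrightarrow> Ql {r} \<in> LOCS k" for r using LOCS_intros(2)[of "{r}" k] by auto
  have 2: "s<k \<Longrightarrow> u!s = Some d \<Longrightarrow> sat u d u (CAnd (CNot (fresh k)) (keep k))" for s
    using assms by (auto simp: sat_fresh sat_ld list_update_beyond)
  show ?thesis
    unfolding step_aut edge_R nofresh_def
    using assms LOCS_intros(1)[of i k] LOCS_intros(5) LOCS_intros(6)[of i k] 1
    apply (auto simp: sat_fresh sat_ld list_update_beyond)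
    using 2 by blast
qed

lemma step_Q: assumes "S \<subseteq> {..<k}" "S \<noteq> {}" "length u = k"
  shows "step (aut k) (Ql S, u) (a,d) (l',v) \<longleftrightarrow> a = 0 \<and> (
     (\<not> nofresh k u d \<and> (\<exists>r<k. r \<notin> S \<and> l' = Ql (insert r S) \<and> v = u[r:=Some d]))
   \<or> (S = {..<k} \<and> u!0 = Some d \<and> l' = Vl 1 \<and> v = u))"
proof -
  have 1: "r<k \<Longrightarrow> Ql (insert r S) \<in> LOCS k" for r using assms LOCS_intros(2)[of "insert r S" k] by auto
  have 2: "S = {..<k} \<Longrightarrow> Vl 1 \<in> LOCS k" using assms LOCS_intros(3)[of 1 k] by auto
  show ?thesis
    unfolding step_aut edge_Q[OF assms(1,2)] nofresh_def
    using assms 1 2 LOCS_intros(2)[OF assms(1,2)]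
    by (auto simp: sat_fresh sat_ld list_update_beyond)
qed

lemma step_V: assumes "1 \<le> j" "j \<le> k" "length u = k"
  shows "step (aut k) (Vl j, u) (a,d) (l',v) \<longleftrightarrow> a = 0 \<and> j < k \<and> u!j = Some d \<and> l' = Vl (Suc j) \<and> v = u"
  unfolding step_aut edge_V[OF assms(1)]
  using assms LOCS_intros(3)[of j k] LOCS_intros(3)[of "Suc j" k]
  by (auto simp: sat_ld list_update_beyond)

lemma step_C: assumes "S \<subseteq> {..<k}" "length u = k"
  shows "step (aut k) (Cl S, u) (a,d) (l',v) \<longleftrightarrow> a = 0 \<and> v = u \<and> (
     (\<exists>r<k. r \<notin> S \<and> u!r = Some d \<and> l' = Cl (insert r S))
   \<or> (S \<noteq> {..<k} \<and> (\<exists>r\<in>S. u!r = Some d) \<and> l' = Sk)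
   \<or> (S \<noteq> {..<k} \<and> \<not> nofresh k u d \<and> l' = Sk)
   \<or> (S = {..<k} \<and> l' = Sk))"
proof -
  have 1: "r<k \<Longrightarrow> Cl (insert r S) \<in> LOCS k" for r using assms LOCS_intros(4)[of "insert r S" k] by auto
  show ?thesis
    unfolding step_aut edge_C[OF assms(1)] nofresh_def
    using assms 1 LOCS_intros(4)[OF assms(1)] LOCS_intros(5)
    by (auto simp: sat_fresh sat_ld list_update_beyond)
qed

lemma step_Sk: assumes "length u = k"
  shows "step (aut k) (Sk, u) (a,d) (l',v) \<longleftrightarrow> a = 0 \<and> l' = Sk \<and> v = u"
  unfolding step_aut edge_Sk using assms LOCS_intros(5) by (auto simp: sat_ld list_update_beyond)



definition injv :: "nat option list \<Rightarrow> bool" where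
  "injv u \<longleftrightarrow> (\<forall>i<length u. \<forall>j<length u. i \<noteq> j \<longrightarrow> u!i \<noteq> None \<longrightarrow> u!i \<noteq> u!j)"
definition vals :: "nat option list \<Rightarrow> nat set" where "vals u = {d. Some d \<in> set u}"
definition shp :: "nat \<Rightarrow> nat set \<Rightarrow> nat option list \<Rightarrow> bool" where
  "shp k S u \<longleftrightarrow> length u = k \<and> injv u \<and> S \<subseteq> {..<k} \<and> (\<forall>r<k. (u!r = None) \<longleftrightarrow> r \<notin> S)"
definition full :: "nat \<Rightarrow> nat option list \<Rightarrow> bool" where
  "full k u \<longleftrightarrow> length u = k \<and> injv u \<and> (\<forall>r<k. u!r \<noteq> None)"
definition wd :: "(nat \<times> nat) list \<Rightarrow> bool" where "wd x \<longleftrightarrow> (\<forall>a\<in>set x. fst a = 0)"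

lemma wd_simps[simp]: "wd []" "wd (a#x) \<longleftrightarrow> fst a = 0 \<and> wd x"
  by (auto simp: wd_def)

lemma nofresh_vals: "length u = k \<Longrightarrow> nofresh k u d \<longleftrightarrow> d \<in> vals u"
  by (auto simp: nofresh_def vals_def in_set_conv_nth)


lemma vals_upd: assumes "r < length u" "u!r = None" shows "vals (u[r:=Some d]) = insert d (vals u)"
proof
  show "vals (u[r:=Some d]) \<subseteq> insert d (vals u)"
  proof
    fix e assume "e \<in> vals (u[r:=Some d])"
    then obtain s where s: "s < length u" "u[r:=Some d]!s = Some e" by (auto simp: vals_def in_set_conv_nth)
    then show "e \<in> insert d (vals u)"
      by (cases "s = r") (auto simp: vals_def in_set_conv_nth nth_list_update)
  qed
  show "insert d (vals u) \<subseteq> vals (u[r:=Some d])"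
  proof
    fix e assume "e \<in> insert d (vals u)"
    then show "e \<in> vals (u[r:=Some d])"
    proof
      assume "e = d" then show ?thesis using assms by (auto simp: vals_def in_set_conv_nth intro!: exI[of _ r])
    next
      assume "e \<in> vals u"
      then obtain s where s: "s < length u" "u!s = Some e" by (auto simp: vals_def in_set_conv_nth)
      then have "s \<noteq> r" using assms by auto
      then show ?thesis using s by (auto simp: vals_def in_set_conv_nth intro!: exI[of _ s])
    qed
  qed
qed

lemma injv_upd: assumes "injv u" "d \<notin> vals u" shows "injv (u[r:=Some d])"
  unfolding injv_def
proof (intro allI impI)
  fix i j assume h: "i < length (u[r:=Some d])" "j < length (u[r:=Some d])" "i \<noteq> j" "u[r:=Some d]!i \<noteq> None"
  have nd: "\<And>s. s < length u \<Longrightarrow> u!s \<noteq> Some d" using assms(2) by (auto simp: vals_def dest: nth_mem)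
  have l: "i < length u" "j < length u" using h by auto
  show "u[r:=Some d]!i \<noteq> u[r:=Some d]!j" using h nd[OF l(1)] nd[OF l(2)] assms(1) l
    by (cases "i = r"; cases "j = r") (auto simp: injv_def nth_list_update)
qed

lemma shp_upd: assumes "shp k S u" "r < k" "r \<notin> S" "d \<notin> vals u"
  shows "shp k (insert r S) (u[r:=Some d])"
  using assms injv_upd[of u d r] by (auto simp: shp_def nth_list_update)

lemma shp_full: "shp k {..<k} u \<Longrightarrow> full k u"
  by (auto simp: shp_def full_def)

lemma full_shp: "full k u \<Longrightarrow> shp k {..<k} u"
  by (auto simp: shp_def full_def)

lemma finite_vals: "finite (vals u)"
proof -
  have "vals u \<subseteq> the ` set u" by (force simp: vals_def)
  then show ?thesis using finite_surj by blast
qed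

lemma ex_fresh: "\<exists>d. d \<notin> vals u"
  using finite_vals ex_new_if_finite[OF infinite_UNIV_nat] by blast

lemma LACC_simps[simp]:
  "Rl i \<in> LACC k \<longleftrightarrow> i < k"
  "Ql S \<notin> LACC k"
  "Vl j \<in> LACC k \<longleftrightarrow> j = k"
  "Sk \<in> LACC k"
  by (auto simp: LACC_def)

lemma LACC_C: "S \<subseteq> {..<k} \<Longrightarrow> Cl S \<in> LACC k \<longleftrightarrow> S \<noteq> {..<k}"
  by (auto simp: LACC_def fin_sub)

lemma step_letter: "step (aut k) q a q' \<Longrightarrow> fst a = 0"
  by (auto simp: step_def EDG_mem P1_mem P2_mem P3_mem P4_mem P5_mem P6_mem P7_mem P8_mem)

lemma acc_wd: "accepts_from (aut k) q x \<Longrightarrow> wd x"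
proof (induction x arbitrary: q)
  case (Cons a x)
  then obtain q' where "step (aut k) q a q'" "accepts_from (aut k) q' x" by (auto simp: acc_Cons)
  then show ?case using Cons.IH step_letter by auto
qed simp

lemma acc_Sk: "length u = k \<Longrightarrow> accepts_from (aut k) (Sk, u) x \<longleftrightarrow> wd x"
proof (induction x)
  case Nil then show ?case by (simp add: acc_Nil)
next
  case (Cons a x)
  obtain c d where a: "a = (c,d)" by (cases a)
  have "accepts_from (aut k) (Sk, u) (a#x) \<longleftrightarrow> c = 0 \<and> accepts_from (aut k) (Sk, u) x"
    unfolding acc_Cons a using step_Sk[OF Cons.prems] by auto
  then show ?case using Cons a by simp
qed

section \<open>Verification chain\<close>

lemma acc_V: assumes "k \<ge> 1" "length b = k" "j \<le> k"
  shows "accepts_from (aut k) (vsrc k j, map Some b) x \<longleftrightarrow> wd x \<and> map snd x = drop j b"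
  using assms(3)
proof (induction x arbitrary: j)
  case Nil
  have "vsrc k j \<in> LACC k \<longleftrightarrow> j = k" using assms by (auto simp: vsrc_def)
  then show ?case using Nil assms by (auto simp add: acc_Nil)
next
  case (Cons a x)
  obtain c d where a: "a = (c,d)" by (cases a)
  have st: "step (aut k) (vsrc k j, map Some b) (c,d) (l', v) \<longleftrightarrow>
       c = 0 \<and> j < k \<and> b!j = d \<and> l' = vsrc k (Suc j) \<and> v = map Some b" for l' v
  proof (cases "j = 0")
    case True
    have ne: "{..<k} \<noteq> {}" using assms(1) by (simp add: lessThan_empty_iff)
    have "step (aut k) (Ql {..<k}, map Some b) (c,d) (l', v) \<longleftrightarrow> c = 0 \<and> b!0 = d \<and> l' = Vl 1 \<and> v = map Some b"
      using step_Q[of "{..<k}" k "map Some b" c d l' v] ne assms by auto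
    then show ?thesis using True assms by (auto simp: vsrc_def)
  next
    case False
    then show ?thesis using step_V[of j k "map Some b" c d l' v] assms Cons.prems
      by (auto simp: vsrc_def)
  qed
  have "accepts_from (aut k) (vsrc k j, map Some b) (a#x) \<longleftrightarrow>
      c = 0 \<and> j < k \<and> b!j = d \<and> accepts_from (aut k) (vsrc k (Suc j), map Some b) x"
    unfolding acc_Cons a using st by auto
  also have "\<dots> \<longleftrightarrow> c = 0 \<and> j < k \<and> b!j = d \<and> wd x \<and> map snd x = drop (Suc j) b"
    using Cons.IH[of "Suc j"] by auto
  also have "\<dots> \<longleftrightarrow> wd (a#x) \<and> map snd (a#x) = drop j b"
    using assms a by (auto simp: Cons_nth_drop_Suc[symmetric]) (metis Cons_nth_drop_Suc drop_all not_le list.distinct(1) list.inject)+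
  finally show ?case .
qed



section \<open>Checker\<close>

lemma injvD: "injv u \<Longrightarrow> i < length u \<Longrightarrow> j < length u \<Longrightarrow> i \<noteq> j \<Longrightarrow> u!i \<noteq> None \<Longrightarrow> u!i \<noteq> u!j"
  by (simp add: injv_def)

definition CG :: "nat \<Rightarrow> nat set \<Rightarrow> nat option list \<Rightarrow> (nat \<times> nat) list \<Rightarrow> bool" where
  "CG k S u x \<longleftrightarrow> distinct (map snd x) \<and> length x = k - card S
     \<and> set (map snd x) = (\<lambda>r. the (u!r)) ` ({..<k} - S)"

lemma full_inj: assumes "full k u" shows "inj_on (\<lambda>r. the (u!r)) {..<k}"
proof (rule inj_onI)
  fix i j assume h: "i \<in> {..<k}" "j \<in> {..<k}" "the (u!i) = the (u!j)"
  have "u!i = Some (the (u!i))" "u!j = Some (the (u!j))" using assms h(1,2) by (auto simp: full_def)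
  then have "u!i = u!j" using h(3) by simp
  moreover have "injv u" "length u = k" "u!i \<noteq> None" using assms h by (auto simp: full_def)
  ultimately show "i = j" using injvD[of u i j] h by auto
qed

lemma full_vals: assumes "full k u" shows "vals u = (\<lambda>r. the (u!r)) ` {..<k}"
proof
  show "vals u \<subseteq> (\<lambda>r. the (u!r)) ` {..<k}"
  proof
    fix d assume "d \<in> vals u"
    then obtain i where "i < length u" "u!i = Some d" by (auto simp: vals_def in_set_conv_nth)
    then show "d \<in> (\<lambda>r. the (u!r)) ` {..<k}" using assms by (auto simp: full_def intro!: image_eqI[of _ _ i])
  qed
  show "(\<lambda>r. the (u!r)) ` {..<k} \<subseteq> vals u"
  proof
    fix d assume "d \<in> (\<lambda>r. the (u!r)) ` {..<k}"
    then obtain i where "i < k" "d = the (u!i)" by auto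
    then have "u!i = Some d" using assms by (auto simp: full_def)
    then show "d \<in> vals u" using \<open>i<k\<close> assms by (auto simp: vals_def full_def in_set_conv_nth)
  qed
qed

lemma full_some: "full k u \<Longrightarrow> r < k \<Longrightarrow> u!r = Some (the (u!r))"
  by (auto simp: full_def)

lemma CG_step: assumes f: "full k u" and S: "S \<subseteq> {..<k}" and r: "r < k" "r \<notin> S" "u!r = Some d"
  shows "CG k S u ((c,d)#x) \<longleftrightarrow> CG k (insert r S) u x"
proof -
  let ?f = "\<lambda>r. the (u!r)"
  have inj: "inj_on ?f {..<k}" using full_inj[OF f] .
  have fr: "?f r = d" using r by simp
  have fin: "finite S" using S fin_sub by blast
  have cS: "card S < k"
  proof -
    have "S \<subset> {..<k}" using S r by auto
    then show ?thesis using psubset_card_mono[of "{..<k}" S] by auto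
  qed
  have ci: "card (insert r S) = Suc (card S)" using fin r by simp
  have img: "?f ` ({..<k} - insert r S) = ?f ` ({..<k} - S) - {d}"
  proof -
    have "{..<k} - insert r S = ({..<k} - S) - {r}" by auto
    then have "?f ` ({..<k} - insert r S) = ?f ` ({..<k} - S) - ?f ` {r}"
      using inj_on_image_set_diff[OF inj, of "{..<k} - S" "{r}"] r by auto
    then show ?thesis using fr by simp
  qed
  have dimg: "d \<in> ?f ` ({..<k} - S)" using r fr by (auto intro!: image_eqI[of _ _ r])
  show ?thesis
  proof
    assume "CG k S u ((c,d)#x)"
    then have h: "distinct (d # map snd x)" "Suc (length x) = k - card S"
      "insert d (set (map snd x)) = ?f ` ({..<k} - S)" by (auto simp: CG_def)
    have "set (map snd x) = ?f ` ({..<k} - S) - {d}" using h(1) h(3) by auto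
    then show "CG k (insert r S) u x" using h ci img by (auto simp: CG_def)
  next
    assume "CG k (insert r S) u x"
    then have h: "distinct (map snd x)" "length x = k - Suc (card S)"
      "set (map snd x) = ?f ` ({..<k} - S) - {d}" using ci img by (auto simp: CG_def)
    have "d \<notin> set (map snd x)" using h(3) by auto
    moreover have "insert d (set (map snd x)) = ?f ` ({..<k} - S)" using h(3) dimg by auto
    ultimately show "CG k S u ((c,d)#x)" using h cS by (auto simp: CG_def)
  qed
qed

lemma acc_C: assumes f: "full k u"
  shows "S \<subseteq> {..<k} \<Longrightarrow> accepts_from (aut k) (Cl S, u) x \<longleftrightarrow> wd x \<and> \<not> CG k S u x"
proof (induction x arbitrary: S)
  case Nil
  have "CG k S u [] \<longleftrightarrow> S = {..<k}"
  proof
    assume "CG k S u []"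
    then have "(\<lambda>r. the (u!r)) ` ({..<k} - S) = {}" by (auto simp: CG_def)
    then show "S = {..<k}" using Nil by auto
  qed (auto simp: CG_def)
  then show ?case using Nil by (simp add: acc_Nil LACC_C)
next
  case (Cons a x)
  obtain c d where a: "a = (c,d)" by (cases a)
  have lu: "length u = k" using f by (simp add: full_def)
  show ?case
  proof (cases "\<exists>r<k. r \<notin> S \<and> u!r = Some d")
    case True
    then obtain r where r: "r < k" "r \<notin> S" "u!r = Some d" by blast
    have uniq: "s = r" if "s < k" "u!s = Some d" for s
    proof (rule ccontr)
      assume "s \<noteq> r"
      moreover have "injv u" "length u = k" using f by (auto simp: full_def)
      ultimately have "u!s \<noteq> u!r" using injvD[of u s r] that r by auto
      then show False using that r by simp
    qed
    have n: "nofresh k u d" using r unfolding nofresh_def by blast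
    have d2: "\<not>(\<exists>r'\<in>S. u!r' = Some d)"
    proof
      assume "\<exists>r'\<in>S. u!r' = Some d"
      then obtain r' where "r' \<in> S" "u!r' = Some d" by blast
      moreover then have "r' < k" using Cons.prems by auto
      ultimately show False using uniq[of r'] r by auto
    qed
    have d4: "S \<noteq> {..<k}" using r by blast
    have st: "step (aut k) (Cl S, u) (c,d) (l',v) \<longleftrightarrow> c = 0 \<and> v = u \<and> l' = Cl (insert r S)" for l' v
    proof -
      have d1: "(\<exists>r'<k. r'\<notin>S \<and> u!r' = Some d \<and> l' = Cl (insert r' S)) \<longleftrightarrow> l' = Cl (insert r S)"
      proof
        assume "\<exists>r'<k. r'\<notin>S \<and> u!r' = Some d \<and> l' = Cl (insert r' S)"
        then obtain r' where "r' < k" "u!r' = Some d" "l' = Cl (insert r' S)" by blast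
        moreover then have "r' = r" using uniq by blast
        ultimately show "l' = Cl (insert r S)" by simp
      qed (use r in blast)
      show ?thesis unfolding step_C[OF Cons.prems lu] using n d1 d2 d4 by blast
    qed
    have "accepts_from (aut k) (Cl S, u) (a#x) \<longleftrightarrow> c = 0 \<and> accepts_from (aut k) (Cl (insert r S), u) x"
      unfolding a acc_Cons split_paired_Ex st by auto
    also have "\<dots> \<longleftrightarrow> c = 0 \<and> wd x \<and> \<not> CG k (insert r S) u x"
      using Cons.IH[of "insert r S"] Cons.prems r by auto
    finally show ?thesis using CG_step[OF f Cons.prems r] a by simp
  next
    case False
    have nS: "nofresh k u d \<Longrightarrow> \<exists>r\<in>S. u!r = Some d" using False unfolding nofresh_def by blast
    have st: "step (aut k) (Cl S, u) (c,d) (l',v) \<longleftrightarrow> c = 0 \<and> v = u \<and> l' = Sk" for l' v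
      unfolding step_C[OF Cons.prems lu] using False nS by blast
    have "accepts_from (aut k) (Cl S, u) (a#x) \<longleftrightarrow> c = 0 \<and> wd x"
      unfolding a acc_Cons split_paired_Ex st using acc_Sk[OF lu] by auto
    moreover have "\<not> CG k S u ((c,d)#x)"
    proof
      assume "CG k S u ((c,d)#x)"
      then have "d \<in> (\<lambda>r. the (u!r)) ` ({..<k} - S)" by (auto simp: CG_def)
      then obtain r where "r < k" "r \<notin> S" "d = the (u!r)" by auto
      then show False using False full_some[OF f, of r] by auto
    qed
    ultimately show ?thesis using a by simp
  qed
qed

section \<open>The deterministic branch\<close>

definition TG :: "nat \<Rightarrow> nat \<Rightarrow> nat option list \<Rightarrow> (nat \<times> nat) list \<Rightarrow> bool" where
  "TG k i u x \<longleftrightarrow> (\<exists>ys b. map snd x = ys @ b \<and> length ys = k - i \<and> distinct ys \<and> set ys \<inter> vals u = {}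
      \<and> length b = k \<and> set b = vals u \<union> set ys)"

definition Rloc :: "nat \<Rightarrow> nat \<Rightarrow> nat" where "Rloc k i = (if i = k then Cl {} else Rl i)"

lemma nextR_Rloc: "nextR k i = Rloc k (Suc i)"
  by (simp add: nextR_def Rloc_def)

lemma card_vals_full: assumes "full k u" shows "card (vals u) = k"
  using card_image[OF full_inj[OF assms]] full_vals[OF assms] by simp

lemma T_k: assumes f: "full k u"
  shows "accepts_from (aut k) (Cl {}, u) x \<longleftrightarrow> wd x \<and> \<not> TG k k u x"
proof -
  have "CG k {} u x \<longleftrightarrow> TG k k u x"
  proof
    assume "CG k {} u x" then show "TG k k u x"
      using full_vals[OF f] by (auto simp: CG_def TG_def)
  next
    assume "TG k k u x"
    then have h: "length (map snd x) = k" "set (map snd x) = vals u" by (auto simp: TG_def)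
    then have "distinct (map snd x)" using card_vals_full[OF f] by (simp add: card_distinct)
    then show "CG k {} u x" using h full_vals[OF f] by (simp add: CG_def)
  qed
  then show ?thesis using acc_C[OF f, of "{}"] by simp
qed

lemma TG_step: assumes "d \<notin> vals u" "vals u' = insert d (vals u)" "i < k"
  shows "TG k i u ((c,d)#x) \<longleftrightarrow> TG k (Suc i) u' x"
proof
  assume "TG k i u ((c,d)#x)"
  then obtain ys b where h: "d # map snd x = ys @ b" "length ys = k - i" "distinct ys"
    "set ys \<inter> vals u = {}" "length b = k" "set b = vals u \<union> set ys" by (auto simp: TG_def)
  obtain ys' where ys: "ys = d # ys'" "map snd x = ys' @ b"
    using h(1,2) assms(3) by (cases ys) auto
  show "TG k (Suc i) u' x" unfolding TG_def
    using h ys assms by (intro exI[of _ ys'] exI[of _ b]) auto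
next
  assume "TG k (Suc i) u' x"
  then obtain ys b where h: "map snd x = ys @ b" "length ys = k - Suc i" "distinct ys"
    "set ys \<inter> vals u' = {}" "length b = k" "set b = vals u' \<union> set ys" by (auto simp: TG_def)
  show "TG k i u ((c,d)#x)" unfolding TG_def
    using h assms by (intro exI[of _ "d#ys"] exI[of _ b]) auto
qed

lemma acc_T: assumes k: "k \<ge> 1"
  shows "1 \<le> i \<Longrightarrow> i \<le> k \<Longrightarrow> shp k {..<i} u \<Longrightarrow>
     accepts_from (aut k) (Rloc k i, u) x \<longleftrightarrow> wd x \<and> \<not> TG k i u x"
proof (induction x arbitrary: i u)
  case Nil
  show ?case
  proof (cases "i = k")
    case True then show ?thesis using T_k[of k u "[]"] shp_full Nil by (simp add: Rloc_def)
  next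
    case False
    have "\<not> TG k i u []" using k by (auto simp: TG_def)
    then show ?thesis using False Nil by (simp add: Rloc_def acc_Nil)
  qed
next
  case (Cons a x)
  obtain c d where a: "a = (c,d)" by (cases a)
  show ?case
  proof (cases "i = k")
    case True then show ?thesis using T_k[of k u] shp_full Cons.prems by (simp add: Rloc_def)
  next
    case False
    then have ik: "i < k" using Cons.prems by simp
    have lu: "length u = k" using Cons.prems by (simp add: shp_def)
    have loc: "Rloc k i = Rl i" using False by (simp add: Rloc_def)
    show ?thesis
    proof (cases "d \<in> vals u")
      case True
      have st: "step (aut k) (Rl i, u) (c,d) (l',v) \<longleftrightarrow> c = 0 \<and> v = u \<and> l' = Sk" for l' v
        unfolding step_R[OF ik lu] nofresh_vals[OF lu] using True Cons.prems by auto
      have "accepts_from (aut k) (Rl i, u) (a#x) \<longleftrightarrow> c = 0 \<and> wd x"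
        unfolding a acc_Cons split_paired_Ex st using acc_Sk[OF lu] by auto
      moreover have "\<not> TG k i u ((c,d)#x)"
      proof
        assume "TG k i u ((c,d)#x)"
        then obtain ys b where h: "d # map snd x = ys @ b" "length ys = k - i"
          "set ys \<inter> vals u = {}" by (auto simp: TG_def)
        then obtain ys' where "ys = d # ys'" using ik by (cases ys) auto
        then show False using h True by auto
      qed
      ultimately show ?thesis using a loc by simp
    next
      case fr: False
      let ?u' = "u[i := Some d]"
      have st: "step (aut k) (Rl i, u) (c,d) (l',v) \<longleftrightarrow> c = 0 \<and> v = ?u' \<and> l' = Rloc k (Suc i)" for l' v
        unfolding step_R[OF ik lu] nofresh_vals[OF lu] nextR_Rloc using fr Cons.prems by auto
      have ui: "u!i = None" using Cons.prems ik by (auto simp: shp_def)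
      have sh: "shp k {..<Suc i} ?u'"
        using shp_upd[OF Cons.prems(3) ik _ fr] lessThan_Suc by auto
      have vu: "vals ?u' = insert d (vals u)" using vals_upd[of i u d] ik lu ui by simp
      have "accepts_from (aut k) (Rl i, u) (a#x) \<longleftrightarrow> c = 0 \<and> accepts_from (aut k) (Rloc k (Suc i), ?u') x"
        unfolding a acc_Cons split_paired_Ex st by auto
      also have "\<dots> \<longleftrightarrow> c = 0 \<and> wd x \<and> \<not> TG k (Suc i) ?u' x"
        using Cons.IH[OF _ _ sh] ik by auto
      finally show ?thesis using TG_step[OF fr vu ik] a loc by simp
    qed
  qed
qed



section \<open>Guessing branch\<close>

definition QG :: "nat \<Rightarrow> nat set \<Rightarrow> nat option list \<Rightarrow> (nat \<times> nat) list \<Rightarrow> bool" where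
  "QG k S u x \<longleftrightarrow> (\<exists>ys b. map snd x = ys @ b \<and> length ys = k - card S \<and> distinct ys \<and> set ys \<inter> vals u = {}
      \<and> length b = k \<and> distinct b \<and> set b = vals u \<union> set ys \<and> (\<forall>r<k. r \<in> S \<longrightarrow> u!r = Some (b!r)))"

lemma step_src: assumes k: "k \<ge> 1" and sh: "shp k S u" and r: "r < k" "r \<notin> S" and d: "d \<notin> vals u"
  shows "step (aut k) (src k S, u) (0,d) (Ql (insert r S), u[r:=Some d])"
proof -
  have lu: "length u = k" using sh by (simp add: shp_def)
  have nf: "\<not> nofresh k u d" using d nofresh_vals[OF lu] by simp
  show ?thesis
  proof (cases "S = {}")
    case True
    then show ?thesis using step_R[of 0 k u 0 d "Ql {r}" "u[r:=Some d]"] k lu nf r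
      by (auto simp: src_def)
  next
    case False
    have "S \<subseteq> {..<k}" using sh by (simp add: shp_def)
    then show ?thesis using step_Q[of S k u 0 d "Ql (insert r S)" "u[r:=Some d]"] False lu nf r
      by (auto simp: src_def)
  qed
qed

lemma full_list: assumes "full k u"
  shows "u = map Some (map the u)" "distinct (map the u)" "set (map the u) = vals u" "length (map the u) = k"
proof -
  have lu: "length u = k" using assms by (simp add: full_def)
  show u: "u = map Some (map the u)"
    using assms by (auto simp: full_def intro!: nth_equalityI)
  show "distinct (map the u)"
  proof -
    have "inj_on (\<lambda>r. the (u!r)) {..<k}" by (rule full_inj[OF assms])
    then show ?thesis using lu by (auto simp: distinct_conv_nth inj_on_def)
  qed
  show "set (map the u) = vals u"
  proof -
    have "set (map the u) = (\<lambda>r. the (u!r)) ` {..<k}"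
    proof
      show "set (map the u) \<subseteq> (\<lambda>r. the (u!r)) ` {..<k}"
      proof
        fix e assume "e \<in> set (map the u)"
        then obtain i where "i < length u" "e = the (u!i)" by (auto simp: in_set_conv_nth)
        then show "e \<in> (\<lambda>r. the (u!r)) ` {..<k}" using lu by auto
      qed
      show "(\<lambda>r. the (u!r)) ` {..<k} \<subseteq> set (map the u)"
      proof
        fix e assume "e \<in> (\<lambda>r. the (u!r)) ` {..<k}"
        then obtain i where "i < k" "e = the (u!i)" by auto
        then show "e \<in> set (map the u)" using lu by (auto simp: in_set_conv_nth intro!: exI[of _ i])
      qed
    qed
    then show ?thesis using full_vals[OF assms] by simp
  qed
  show "length (map the u) = k" using lu by simp
qed

lemma card_lt: "S \<subseteq> {..<k} \<Longrightarrow> r < k \<Longrightarrow> r \<notin> S \<Longrightarrow> card S < (k::nat)"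
proof -
  assume a: "S \<subseteq> {..<k}" "r < k" "r \<notin> S"
  then have "S \<subset> {..<k}" by auto
  then show ?thesis using psubset_card_mono[of "{..<k}" S] by auto
qed

lemma Q_fwd: assumes k: "k \<ge> 1"
  shows "S \<noteq> {} \<Longrightarrow> shp k S u \<Longrightarrow> accepts_from (aut k) (Ql S, u) x \<Longrightarrow> QG k S u x"
proof (induction x arbitrary: S u)
  case Nil then show ?case by (simp add: acc_Nil)
next
  case (Cons a x)
  obtain c d where a: "a = (c,d)" by (cases a)
  have lu: "length u = k" and Sk: "S \<subseteq> {..<k}" using Cons.prems by (auto simp: shp_def)
  from Cons.prems(3) obtain l' v where st: "step (aut k) (Ql S, u) (c,d) (l',v)"
    and ac: "accepts_from (aut k) (l',v) x" by (auto simp: acc_Cons a)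
  from st[unfolded step_Q[OF Sk Cons.prems(1) lu]]
  have "(\<not> nofresh k u d \<and> (\<exists>r<k. r \<notin> S \<and> l' = Ql (insert r S) \<and> v = u[r:=Some d]))
      \<or> (S = {..<k} \<and> u!0 = Some d \<and> l' = Vl 1 \<and> v = u)" by auto
  then show ?case
  proof
    assume "\<not> nofresh k u d \<and> (\<exists>r<k. r \<notin> S \<and> l' = Ql (insert r S) \<and> v = u[r:=Some d])"
    then obtain r where r: "r < k" "r \<notin> S" and l': "l' = Ql (insert r S)" and v: "v = u[r:=Some d]"
      and nf: "\<not> nofresh k u d" by blast
    have dv: "d \<notin> vals u" using nf nofresh_vals[OF lu] by simp
    have sh: "shp k (insert r S) v" using shp_upd[OF Cons.prems(2) r dv] v by simp
    have ur: "u!r = None" using Cons.prems(2) r by (auto simp: shp_def)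
    have vv: "vals v = insert d (vals u)" using vals_upd[of r u d] r lu ur v by simp
    have "QG k (insert r S) v x" using Cons.IH[OF _ sh] ac l' by simp
    then obtain ys b where h: "map snd x = ys @ b" "length ys = k - card (insert r S)" "distinct ys"
      "set ys \<inter> vals v = {}" "length b = k" "distinct b" "set b = vals v \<union> set ys"
      "\<forall>r'<k. r' \<in> insert r S \<longrightarrow> v!r' = Some (b!r')" unfolding QG_def by blast
    have fin: "finite S" using Sk fin_sub by blast
    have cS: "card S < k" using card_lt[OF Sk r] .
    have ci: "card (insert r S) = Suc (card S)" using fin r by simp
    have agree: "\<forall>r'<k. r' \<in> S \<longrightarrow> u!r' = Some (b!r')"
    proof (intro allI impI)
      fix r' assume "r' < k" "r' \<in> S"
      then have "r' \<noteq> r" "v!r' = Some (b!r')" using h(8) r by auto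
      then show "u!r' = Some (b!r')" using v by simp
    qed
    show "QG k S u (a#x)" unfolding QG_def
    proof (rule exI[of _ "d#ys"], rule exI[of _ b], intro conjI)
      show "map snd (a#x) = (d#ys) @ b" using a h(1) by simp
      show "length (d#ys) = k - card S" using h(2) ci cS by simp
      show "distinct (d#ys)" using h(3,4) vv by auto
      show "set (d#ys) \<inter> vals u = {}" using h(4) vv dv by auto
      show "length b = k" "distinct b" by (fact h(5), fact h(6))
      show "set b = vals u \<union> set (d#ys)" using h(7) vv by auto
    qed (fact agree)
  next
    assume h: "S = {..<k} \<and> u!0 = Some d \<and> l' = Vl 1 \<and> v = u"
    have f: "full k u" using shp_full Cons.prems(2) h by simp
    let ?b = "map the u"
    note fl = full_list[OF f]
    have "accepts_from (aut k) (vsrc k 1, map Some ?b) x" using ac h fl(1) by (simp add: vsrc_def)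
    then have m1: "map snd x = drop 1 ?b" using acc_V[OF k fl(4), of 1 x] k by simp
    have m2: "?b ! 0 = d" using h k lu by simp
    have ag: "\<forall>r<k. r \<in> S \<longrightarrow> u!r = Some (?b!r)" using full_some[OF f] lu by auto
    have "?b \<noteq> []" using k lu by (cases u) auto
    then have "?b = ?b!0 # drop 1 ?b" by (cases ?b) auto
    then have eq: "map snd (a#x) = ?b" using a m1 m2 by simp
    show "QG k S u (a#x)" unfolding QG_def
      apply (rule exI[of _ "[]"], rule exI[of _ ?b])
      using eq fl(2,3) lu ag h by simp
  qed
qed

lemma Q_bwd: assumes k: "k \<ge> 1"
  shows "shp k S u \<Longrightarrow> wd x \<Longrightarrow> QG k S u x \<Longrightarrow> accepts_from (aut k) (src k S, u) x"
proof (induction x arbitrary: S u)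
  case Nil
  then show ?case using k by (auto simp: QG_def)
next
  case (Cons a x)
  obtain c d where a: "a = (c,d)" by (cases a)
  have c: "c = 0" using Cons.prems(2) a by simp
  have lu: "length u = k" and Sk: "S \<subseteq> {..<k}" using Cons.prems by (auto simp: shp_def)
  from Cons.prems(3) obtain ys b where h: "d # map snd x = ys @ b" "length ys = k - card S" "distinct ys"
      "set ys \<inter> vals u = {}" "length b = k" "distinct b" "set b = vals u \<union> set ys"
      "\<forall>r<k. r \<in> S \<longrightarrow> u!r = Some (b!r)" unfolding QG_def a by auto
  show ?case
  proof (cases "S = {..<k}")
    case True
    have "ys = []" using h(2) True by simp
    then have bx: "b = d # map snd x" using h(1) by simp
    have ub: "u = map Some b" using h(8) True lu h(5) by (auto intro!: nth_equalityI)
    have ne: "S \<noteq> {}" using True k by (auto simp: lessThan_empty_iff)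
    have "src k S = vsrc k 0" using True ne by (simp add: src_def vsrc_def)
    then show ?thesis using acc_V[OF k h(5), of 0 "a#x"] ub bx Cons.prems(2) a by simp
  next
    case False
    then obtain r0 where "r0 < k" "r0 \<notin> S" using Sk by auto
    then have cS: "card S < k" using card_lt[OF Sk] by blast
    then obtain ys' where ys: "ys = d # ys'" using h(1) h(2) by (cases ys) auto
    have mx: "map snd x = ys' @ b" using h(1) ys by simp
    have "d \<in> set b" using h(7) ys by auto
    then obtain r where r: "r < k" "b!r = d" using h(5) by (auto simp: in_set_conv_nth)
    have dv: "d \<notin> vals u" using h(4) ys by auto
    have rS: "r \<notin> S"
    proof
      assume "r \<in> S" then have "u!r = Some d" using h(8) r by auto
      then have "d \<in> vals u" using r lu by (auto simp: vals_def in_set_conv_nth)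
      then show False using dv by simp
    qed
    let ?v = "u[r:=Some d]"
    have sh: "shp k (insert r S) ?v" using shp_upd[OF Cons.prems(1) r(1) rS dv] .
    have ur: "u!r = None" using Cons.prems(1) r rS by (auto simp: shp_def)
    have vv: "vals ?v = insert d (vals u)" using vals_upd[of r u d] r lu ur by simp
    have fin: "finite S" using Sk fin_sub by blast
    have ci: "card (insert r S) = Suc (card S)" using fin rS by simp
    have "QG k (insert r S) ?v x" unfolding QG_def
    proof (rule exI[of _ ys'], rule exI[of _ b], intro conjI)
      show "map snd x = ys' @ b" by (fact mx)
      show "length ys' = k - card (insert r S)" using h(2) ys ci by simp
      show "distinct ys'" using h(3) ys by simp
      show "set ys' \<inter> vals ?v = {}" using h(3,4) ys vv by auto
      show "length b = k" "distinct b" by (fact h(5), fact h(6))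
      show "set b = vals ?v \<union> set ys'" using h(7) ys vv by auto
      show "\<forall>r'<k. r' \<in> insert r S \<longrightarrow> ?v!r' = Some (b!r')"
        using h(8) r lu by (auto simp: nth_list_update)
    qed
    then have "accepts_from (aut k) (src k (insert r S), ?v) x" using Cons.IH[OF sh] Cons.prems(2) by simp
    moreover have "src k (insert r S) = Ql (insert r S)" by (simp add: src_def)
    moreover have "step (aut k) (src k S, u) a (Ql (insert r S), ?v)" using step_src[OF k Cons.prems(1) r(1) rS dv] a c by simp
    ultimately show ?thesis by (auto simp: acc_Cons)
  qed
qed

lemma Q_nonempty: assumes k: "k \<ge> 1"
  shows "shp k S u \<Longrightarrow> \<exists>x. wd x \<and> accepts_from (aut k) (src k S, u) x"
proof (induction "k - card S" arbitrary: S u rule: less_induct)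
  case less
  have lu: "length u = k" and Sk: "S \<subseteq> {..<k}" using less.prems by (auto simp: shp_def)
  show ?case
  proof (cases "S = {..<k}")
    case True
    have f: "full k u" using shp_full less.prems True by simp
    note fl = full_list[OF f]
    have ne: "S \<noteq> {}" using True k by (auto simp: lessThan_empty_iff)
    have "src k S = vsrc k 0" using True ne by (simp add: src_def vsrc_def)
    moreover have "accepts_from (aut k) (vsrc k 0, map Some (map the u)) (map (Pair 0) (map the u))"
      using acc_V[OF k fl(4), of 0] by (simp add: wd_def comp_def)
    ultimately show ?thesis using fl(1) by (intro exI[of _ "map (Pair 0) (map the u)"]) (auto simp: wd_def)
  next
    case False
    then obtain r where r: "r < k" "r \<notin> S" using Sk by auto
    obtain d where dv: "d \<notin> vals u" using ex_fresh by blast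
    let ?v = "u[r:=Some d]"
    have sh: "shp k (insert r S) ?v" using shp_upd[OF less.prems r dv] .
    have fin: "finite S" using Sk fin_sub by blast
    have "k - card (insert r S) < k - card S" using card_lt[OF Sk r] fin r by simp
    then obtain x where x: "wd x" "accepts_from (aut k) (src k (insert r S), ?v) x"
      using less.hyps sh by blast
    have "step (aut k) (src k S, u) (0,d) (Ql (insert r S), ?v)" using step_src[OF k less.prems r dv] .
    moreover have "src k (insert r S) = Ql (insert r S)" by (simp add: src_def)
    ultimately have "accepts_from (aut k) (src k S, u) ((0,d)#x)" using x unfolding acc_Cons by auto
    then show ?thesis using x by (intro exI[of _ "(0,d)#x"]) simp
  qed
qed



definition Inv :: "nat \<Rightarrow> nat \<times> nat option list \<Rightarrow> bool" where
  "Inv k q \<longleftrightarrow> (\<exists>i<k. fst q = Rl i \<and> shp k {..<i} (snd q))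
   \<or> (\<exists>S. S \<noteq> {} \<and> fst q = Ql S \<and> shp k S (snd q))
   \<or> (\<exists>j. 1 \<le> j \<and> j \<le> k \<and> fst q = Vl j \<and> full k (snd q))
   \<or> (\<exists>S. S \<subseteq> {..<k} \<and> fst q = Cl S \<and> full k (snd q))
   \<or> (fst q = Sk \<and> length (snd q) = k \<and> injv (snd q))"

lemma init_aut: "init_state (aut k) = (Rl 0, replicate k None)"
  by (simp add: init_state_def)

lemma shp_init: "shp k {} (replicate k None)"
  by (auto simp: shp_def injv_def)

lemma Inv_init: "k \<ge> 1 \<Longrightarrow> Inv k (init_state (aut k))"
  unfolding init_aut Inv_def using shp_init[of k] by auto

lemma Inv_R: "i < k \<Longrightarrow> shp k {..<i} u \<Longrightarrow> Inv k (Rl i, u)"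
  unfolding Inv_def by (rule disjI1, rule exI[of _ i]) simp
lemma Inv_Q: "S \<noteq> {} \<Longrightarrow> shp k S u \<Longrightarrow> Inv k (Ql S, u)"
  unfolding Inv_def by (rule disjI2, rule disjI1, rule exI[of _ S]) simp
lemma Inv_V: "1 \<le> j \<Longrightarrow> j \<le> k \<Longrightarrow> full k u \<Longrightarrow> Inv k (Vl j, u)"
  unfolding Inv_def by (rule disjI2, rule disjI2, rule disjI1, rule exI[of _ j]) simp
lemma Inv_C: "S \<subseteq> {..<k} \<Longrightarrow> full k u \<Longrightarrow> Inv k (Cl S, u)"
  unfolding Inv_def by (rule disjI2, rule disjI2, rule disjI2, rule disjI1, rule exI[of _ S]) simp
lemma Inv_Sk: "length u = k \<Longrightarrow> injv u \<Longrightarrow> Inv k (Sk, u)"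
  unfolding Inv_def by simp

lemma Inv_injv: "Inv k q \<Longrightarrow> injv (snd q) \<and> length (snd q) = k"
  unfolding Inv_def by (auto simp: shp_def full_def)

lemma shp_len: "shp k S u \<Longrightarrow> length u = k \<and> S \<subseteq> {..<k}"
  by (simp add: shp_def)

lemma Inv_step: assumes k: "k \<ge> 1" and I: "Inv k q" and st: "step (aut k) q a q'"
  shows "Inv k q'"
proof -
  obtain l u where q: "q = (l,u)" by (cases q)
  obtain c d where a: "a = (c,d)" by (cases a)
  obtain l' v where q': "q' = (l',v)" by (cases q')
  note st = st[unfolded q a q']
  from I[unfolded Inv_def q] show ?thesis
  proof (elim disjE exE conjE)
    fix i assume i: "i < k" "fst (l,u) = Rl i" "shp k {..<i} (snd (l,u))"
    then have l: "l = Rl i" and sh: "shp k {..<i} u" by auto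
    have lu: "length u = k" using sh by (simp add: shp_def)
    from st[unfolded l step_R[OF i(1) lu]] have
      "(\<not> nofresh k u d \<and> l' = nextR k i \<and> v = u[i:=Some d]) \<or> (nofresh k u d \<and> l' = Sk \<and> v = u)
       \<or> (i = 0 \<and> \<not> nofresh k u d \<and> (\<exists>r<k. l' = Ql {r} \<and> v = u[r:=Some d]))" by auto
    then show ?thesis
    proof (elim disjE conjE exE)
      assume h: "\<not> nofresh k u d" "l' = nextR k i" "v = u[i:=Some d]"
      have dv: "d \<notin> vals u" using h nofresh_vals[OF lu] by simp
      have sh': "shp k {..<Suc i} v" using shp_upd[OF sh i(1) _ dv] h lessThan_Suc by auto
      show ?thesis
      proof (cases "Suc i = k")
        case True
        then have "full k v" using shp_full sh' by simp
        then show ?thesis using True h q' Inv_C[of "{}" k v] unfolding nextR_def by auto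
      next
        case False
        then have "Suc i < k" using i by simp
        then show ?thesis using h sh' q' Inv_R[of "Suc i" k v] False unfolding nextR_def by auto
      qed
    next
      assume h: "nofresh k u d" "l' = Sk" "v = u"
      then show ?thesis using sh q' Inv_Sk[of u k] unfolding shp_def by auto
    next
      fix r assume h: "i = 0" "\<not> nofresh k u d" "r < k" "l' = Ql {r}" "v = u[r:=Some d]"
      have dv: "d \<notin> vals u" using h nofresh_vals[OF lu] by simp
      have "shp k {r} v" using shp_upd[OF _ h(3) _ dv, of "{}"] sh h by auto
      then show ?thesis using h q' Inv_Q[of "{r}" k v] by auto
    qed
  next
    fix S assume S: "S \<noteq> {}" "fst (l,u) = Ql S" "shp k S (snd (l,u))"
    then have l: "l = Ql S" and sh: "shp k S u" by auto
    have lu: "length u = k" and Sk: "S \<subseteq> {..<k}" using sh by (auto simp: shp_def)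
    from st[unfolded l step_Q[OF Sk S(1) lu]] have
      "(\<not> nofresh k u d \<and> (\<exists>r<k. r \<notin> S \<and> l' = Ql (insert r S) \<and> v = u[r:=Some d]))
       \<or> (S = {..<k} \<and> u!0 = Some d \<and> l' = Vl 1 \<and> v = u)" by auto
    then show ?thesis
    proof (elim disjE conjE exE)
      fix r assume h: "\<not> nofresh k u d" "r < k" "r \<notin> S" "l' = Ql (insert r S)" "v = u[r:=Some d]"
      have dv: "d \<notin> vals u" using h nofresh_vals[OF lu] by simp
      have "shp k (insert r S) v" using shp_upd[OF sh h(2,3) dv] h by simp
      then show ?thesis using h q' Inv_Q[of "insert r S" k v] by auto
    next
      assume h: "S = {..<k}" "u!0 = Some d" "l' = Vl 1" "v = u"
      then have "full k v" using shp_full sh by simp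
      then show ?thesis using h q' k Inv_V[of 1 k v] by auto
    qed
  next
    fix j assume j: "1 \<le> j" "j \<le> k" "fst (l,u) = Vl j" "full k (snd (l,u))"
    then have l: "l = Vl j" and f: "full k u" by auto
    have lu: "length u = k" using f by (simp add: full_def)
    from st[unfolded l step_V[OF j(1,2) lu]] have "j < k" "l' = Vl (Suc j)" "v = u" by auto
    then show ?thesis using f q' Inv_V[of "Suc j" k v] by auto
  next
    fix S assume S: "S \<subseteq> {..<k}" "fst (l,u) = Cl S" "full k (snd (l,u))"
    then have l: "l = Cl S" and f: "full k u" by auto
    have lu: "length u = k" using f by (simp add: full_def)
    from st[unfolded l step_C[OF S(1) lu]] have v: "v = u" and
      "(\<exists>r<k. r \<notin> S \<and> u!r = Some d \<and> l' = Cl (insert r S)) \<or> l' = Sk" by auto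
    then show ?thesis
    proof (elim disjE exE conjE)
      fix r assume "r < k" "r \<notin> S" "u!r = Some d" "l' = Cl (insert r S)"
      then show ?thesis using f v q' S Inv_C[of "insert r S" k v] by auto
    next
      assume "l' = Sk" then show ?thesis using f v q' Inv_Sk[of v k] unfolding full_def by auto
    qed
  next
    assume "fst (l,u) = Sk" "length (snd (l,u)) = k" "injv (snd (l,u))"
    then have l: "l = Sk" and lu: "length u = k" and iu: "injv u" by auto
    from st[unfolded l step_Sk[OF lu]] show ?thesis using lu iu q' Inv_Sk[of v k] by auto
  qed
qed

section \<open>Disjointness\<close>

lemma Q_disj: assumes k: "k \<ge> 1" and sh: "shp k S u" and dv: "d \<notin> vals u"
  and r: "r1 < k" "r1 \<notin> S" "r2 < k" "r2 \<notin> S"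
  and a1: "accepts_from (aut k) (Ql (insert r1 S), u[r1:=Some d]) w"
  and a2: "accepts_from (aut k) (Ql (insert r2 S), u[r2:=Some d]) w"
  shows "r1 = r2"
proof -
  have lu: "length u = k" and Sk: "S \<subseteq> {..<k}" using sh by (auto simp: shp_def)
  have fin: "finite S" using Sk fin_sub by blast
  have sh1: "shp k (insert r1 S) (u[r1:=Some d])" using shp_upd[OF sh r(1,2) dv] .
  have sh2: "shp k (insert r2 S) (u[r2:=Some d])" using shp_upd[OF sh r(3,4) dv] .
  obtain ys1 b1 where h1: "map snd w = ys1 @ b1" "length ys1 = k - card (insert r1 S)" "distinct b1" "length b1 = k"
    "\<forall>r<k. r \<in> insert r1 S \<longrightarrow> u[r1:=Some d]!r = Some (b1!r)"
    using Q_fwd[OF k _ sh1 a1] unfolding QG_def by blast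
  obtain ys2 b2 where h2: "map snd w = ys2 @ b2" "length ys2 = k - card (insert r2 S)"
    "\<forall>r<k. r \<in> insert r2 S \<longrightarrow> u[r2:=Some d]!r = Some (b2!r)"
    using Q_fwd[OF k _ sh2 a2] unfolding QG_def by blast
  have "card (insert r1 S) = card (insert r2 S)" using fin r by simp
  then have "length ys1 = length ys2" using h1(2) h2(2) by simp
  then have "b1 = b2" using h1(1) h2(1) by (simp add: append_eq_append_conv)
  moreover have "b1!r1 = d" using h1(5) r lu by auto
  moreover have "b2!r2 = d" using h2(3) r lu by auto
  ultimately have "b1!r1 = b1!r2" by simp
  then show ?thesis using h1(3,4) r by (simp add: nth_eq_iff_index_eq)
qed

lemma vals_init: "shp k {} u \<Longrightarrow> vals u = {}"
  by (auto simp: shp_def vals_def in_set_conv_nth)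

lemma R0_TQ: assumes k: "k \<ge> 1" and sh: "shp k {} u" and r: "r < k"
  and a1: "accepts_from (aut k) (nextR k 0, u[0:=Some d]) w"
  and a2: "accepts_from (aut k) (Ql {r}, u[r:=Some d]) w"
  shows False
proof -
  have lu: "length u = k" using sh by (simp add: shp_def)
  have v0: "vals u = {}" using vals_init[OF sh] .
  have dv: "d \<notin> vals u" using v0 by simp
  have un: "\<And>s. s < k \<Longrightarrow> u!s = None" using sh by (auto simp: shp_def)
  have sh0: "shp k {..<1} (u[0:=Some d])" using shp_upd[OF sh _ _ dv, of 0] k by (auto simp: lessThan_Suc)
  have shr: "shp k {r} (u[r:=Some d])" using shp_upd[OF sh r _ dv] by simp
  have vv0: "vals (u[0:=Some d]) = {d}" using vals_upd[of 0 u d] k lu un v0 by simp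
  have vvr: "vals (u[r:=Some d]) = {d}" using vals_upd[of r u d] r lu un v0 by simp
  have "\<not> TG k 1 (u[0:=Some d]) w"
    using acc_T[OF k _ _ sh0, of w] a1 k by (simp add: nextR_Rloc)
  moreover have "QG k {r} (u[r:=Some d]) w" using Q_fwd[OF k _ shr a2] by simp
  then have "TG k 1 (u[0:=Some d]) w" unfolding QG_def TG_def using vv0 vvr by auto
  ultimately show False by simp
qed

lemma step_C_det: assumes f: "full k u" and S: "S \<subseteq> {..<k}"
  and s1: "step (aut k) (Cl S, u) a q1" and s2: "step (aut k) (Cl S, u) a q2"
  shows "q1 = q2"
proof -
  obtain c d where a: "a = (c,d)" by (cases a)
  obtain l1 v1 where q1: "q1 = (l1,v1)" by (cases q1)
  obtain l2 v2 where q2: "q2 = (l2,v2)" by (cases q2)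
  have lu: "length u = k" using f by (simp add: full_def)
  have iu: "injv u" using f by (simp add: full_def)
  note e1 = s1[unfolded a q1 step_C[OF S lu]]
  note e2 = s2[unfolded a q2 step_C[OF S lu]]
  show ?thesis
  proof (cases "\<exists>r<k. r \<notin> S \<and> u!r = Some d")
    case True
    then obtain r where r: "r < k" "r \<notin> S" "u!r = Some d" by blast
    have uniq: "s = r" if "s < k" "u!s = Some d" for s
    proof (rule ccontr)
      assume "s \<noteq> r"
      then have "u!s \<noteq> u!r" using injvD[of u s r] iu that r lu by auto
      then show False using that r by simp
    qed
    have n: "nofresh k u d" using r unfolding nofresh_def by blast
    have d2: "\<not>(\<exists>r'\<in>S. u!r' = Some d)"
    proof
      assume "\<exists>r'\<in>S. u!r' = Some d"
      then obtain r' where "r' \<in> S" "u!r' = Some d" by blast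
      moreover then have "r' < k" using S by auto
      ultimately show False using uniq[of r'] r by auto
    qed
    have d4: "S \<noteq> {..<k}" using r by blast
    have "l1 = Cl (insert r S)"
    proof -
      from e1 n d2 d4 obtain r' where "r' < k" "u!r' = Some d" "l1 = Cl (insert r' S)" by blast
      then show ?thesis using uniq by blast
    qed
    moreover have "l2 = Cl (insert r S)"
    proof -
      from e2 n d2 d4 obtain r' where "r' < k" "u!r' = Some d" "l2 = Cl (insert r' S)" by blast
      then show ?thesis using uniq by blast
    qed
    ultimately show ?thesis using e1 e2 q1 q2 by simp
  next
    case False
    then show ?thesis using e1 e2 q1 q2 by auto
  qed
qed

lemma det: assumes k: "k \<ge> 1" and I: "Inv k q"
  and s1: "step (aut k) q a q1" and s2: "step (aut k) q a q2"
  and a1: "accepts_from (aut k) q1 w" and a2: "accepts_from (aut k) q2 w"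
  shows "q1 = q2"
proof -
  obtain l u where q: "q = (l,u)" by (cases q)
  obtain c d where a: "a = (c,d)" by (cases a)
  obtain l1 v1 where q1: "q1 = (l1,v1)" by (cases q1)
  obtain l2 v2 where q2: "q2 = (l2,v2)" by (cases q2)
  note s1 = s1[unfolded q a q1] and s2 = s2[unfolded q a q2]
  note a1 = a1[unfolded q1] and a2 = a2[unfolded q2]
  from I[unfolded Inv_def q] show ?thesis
  proof (elim disjE exE conjE)
    fix i assume i: "i < k" "fst (l,u) = Rl i" "shp k {..<i} (snd (l,u))"
    then have l: "l = Rl i" and sh: "shp k {..<i} u" by auto
    have lu: "length u = k" using sh by (simp add: shp_def)
    note e1 = s1[unfolded l step_R[OF i(1) lu]] and e2 = s2[unfolded l step_R[OF i(1) lu]]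
    show ?thesis
    proof (cases "i = 0")
      case False
      then show ?thesis using e1 e2 q1 q2 by auto
    next
      case True
      have sh0: "shp k {} u" using sh True by simp
      have nf: "\<not> nofresh k u d" using vals_init[OF sh0] nofresh_vals[OF lu] by simp
      have dv: "d \<notin> vals u" using vals_init[OF sh0] by simp
      from e1 True nf have c1: "(l1 = nextR k 0 \<and> v1 = u[0:=Some d]) \<or> (\<exists>r<k. l1 = Ql {r} \<and> v1 = u[r:=Some d])"
        by auto
      from e2 True nf have c2: "(l2 = nextR k 0 \<and> v2 = u[0:=Some d]) \<or> (\<exists>r<k. l2 = Ql {r} \<and> v2 = u[r:=Some d])"
        by auto
      from c1 show ?thesis
      proof (elim disjE exE conjE)
        assume t1: "l1 = nextR k 0" "v1 = u[0:=Some d]"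
        from c2 show ?thesis
        proof (elim disjE exE conjE)
          fix r assume "r < k" "l2 = Ql {r}" "v2 = u[r:=Some d]"
          then show ?thesis using R0_TQ[OF k sh0 \<open>r<k\<close>, of d w] a1 a2 t1 by simp
        qed (use t1 q1 q2 in simp)
      next
        fix r1 assume t1: "r1 < k" "l1 = Ql {r1}" "v1 = u[r1:=Some d]"
        from c2 show ?thesis
        proof (elim disjE exE conjE)
          assume "l2 = nextR k 0" "v2 = u[0:=Some d]"
          then show ?thesis using R0_TQ[OF k sh0 t1(1), of d w] a1 a2 t1 by simp
        next
          fix r2 assume t2: "r2 < k" "l2 = Ql {r2}" "v2 = u[r2:=Some d]"
          have "r1 = r2" using Q_disj[OF k sh0 dv t1(1) _ t2(1), of w] a1 a2 t1 t2 by simp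
          then show ?thesis using t1 t2 q1 q2 by simp
        qed
      qed
    qed
  next
    fix S assume S: "S \<noteq> {}" "fst (l,u) = Ql S" "shp k S (snd (l,u))"
    then have l: "l = Ql S" and sh: "shp k S u" by auto
    have lu: "length u = k" and Sk: "S \<subseteq> {..<k}" using sh by (auto simp: shp_def)
    note e1 = s1[unfolded l step_Q[OF Sk S(1) lu]] and e2 = s2[unfolded l step_Q[OF Sk S(1) lu]]
    show ?thesis
    proof (cases "S = {..<k}")
      case True
      then show ?thesis using e1 e2 q1 q2 by auto
    next
      case False
      obtain r1 where t1: "r1 < k" "r1 \<notin> S" "l1 = Ql (insert r1 S)" "v1 = u[r1:=Some d]" "\<not> nofresh k u d"
        using e1 False by auto
      obtain r2 where t2: "r2 < k" "r2 \<notin> S" "l2 = Ql (insert r2 S)" "v2 = u[r2:=Some d]"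
        using e2 False by auto
      have dv: "d \<notin> vals u" using t1(5) nofresh_vals[OF lu] by simp
      have "r1 = r2" using Q_disj[OF k sh dv t1(1,2) t2(1,2), of w] a1 a2 t1 t2 by simp
      then show ?thesis using t1 t2 q1 q2 by simp
    qed
  next
    fix j assume j: "1 \<le> j" "j \<le> k" "fst (l,u) = Vl j" "full k (snd (l,u))"
    then have l: "l = Vl j" and lu: "length u = k" by (auto simp: full_def)
    show ?thesis using s1[unfolded l step_V[OF j(1,2) lu]] s2[unfolded l step_V[OF j(1,2) lu]] q1 q2 by auto
  next
    fix S assume S: "S \<subseteq> {..<k}" "fst (l,u) = Cl S" "full k (snd (l,u))"
    then have l: "l = Cl S" and f: "full k u" by auto
    show ?thesis using step_C_det[OF f S(1)] s1 s2 l q1 q2 by auto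
  next
    assume "fst (l,u) = Sk" "length (snd (l,u)) = k" "injv (snd (l,u))"
    then have l: "l = Sk" and lu: "length u = k" by auto
    show ?thesis using s1[unfolded l step_Sk[OF lu]] s2[unfolded l step_Sk[OF lu]] q1 q2 by auto
  qed
qed



lemma words_aut: "w \<in> words (aut k) \<longleftrightarrow> wd w"
  by (simp add: words_def wd_def)

lemma univ: assumes k: "k \<ge> 1" and w: "wd w"
  shows "accepts_from (aut k) (init_state (aut k)) w"
proof (cases w)
  case Nil then show ?thesis using k by (simp add: init_aut acc_Nil)
next
  case (Cons a x)
  obtain c d where a: "a = (c,d)" by (cases a)
  have c: "c = 0" and wx: "wd x" using w Cons a by auto
  let ?u0 = "replicate k None :: nat option list"
  let ?u1 = "?u0[0:=Some d]"
  have sh0: "shp k {} ?u0" by (rule shp_init)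
  have v0: "vals ?u0 = {}" using vals_init[OF sh0] .
  have sh1: "shp k {..<1} ?u1" using shp_upd[OF sh0 _ _, of 0 d] k v0 by (auto simp: lessThan_Suc)
  have vv1: "vals ?u1 = {d}" using vals_upd[of 0 ?u0 d] k v0 by simp
  show ?thesis
  proof (cases "TG k 1 ?u1 x")
    case True
    then obtain ys b where h: "map snd x = ys @ b" "length ys = k - 1" "distinct ys"
      "set ys \<inter> {d} = {}" "length b = k" "set b = {d} \<union> set ys" unfolding TG_def vv1 by blast
    have dys: "d \<notin> set ys" using h(4) by auto
    have "card (set b) = k" using h(3,2,6) dys k by (simp add: distinct_card)
    then have db: "distinct b" using h(5) by (simp add: card_distinct)
    have "QG k {} ?u0 w" unfolding QG_def
    proof (rule exI[of _ "d#ys"], rule exI[of _ b], intro conjI)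
      show "map snd w = (d#ys) @ b" using Cons a h(1) by simp
      show "length (d#ys) = k - card {}" using h(2) k by simp
      show "distinct (d#ys)" using h(3) dys by simp
      show "set (d#ys) \<inter> vals ?u0 = {}" using v0 by simp
      show "length b = k" by (fact h(5))
      show "distinct b" by (fact db)
      show "set b = vals ?u0 \<union> set (d#ys)" using h(6) v0 by simp
    qed simp
    then have "accepts_from (aut k) (src k {}, ?u0) w" using Q_bwd[OF k sh0 w] by simp
    then show ?thesis by (simp add: init_aut src_def)
  next
    case False
    have "accepts_from (aut k) (Rloc k 1, ?u1) x" using acc_T[OF k _ k sh1] False wx by simp
    moreover have "step (aut k) (Rl 0, ?u0) (c,d) (nextR k 0, ?u1)"
      using step_R[of 0 k ?u0 c d "nextR k 0" ?u1] k c nofresh_vals[of ?u0 k d] v0 by simp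
    ultimately show ?thesis using Cons a by (auto simp: init_aut acc_Cons nextR_Rloc)
  qed
qed

lemma Inv_nonempty: assumes k: "k \<ge> 1" and I: "Inv k q"
  shows "\<exists>w. wd w \<and> accepts_from (aut k) q w"
proof -
  obtain l u where q: "q = (l,u)" by (cases q)
  from I[unfolded Inv_def q] show ?thesis
  proof (elim disjE exE conjE)
    fix i assume "i < k" "fst (l,u) = Rl i" "shp k {..<i} (snd (l,u))"
    then show ?thesis using q by (intro exI[of _ "[]"]) (simp add: acc_Nil)
  next
    fix S assume S: "S \<noteq> {}" "fst (l,u) = Ql S" "shp k S (snd (l,u))"
    then show ?thesis using Q_nonempty[OF k, of S u] q by (simp add: src_def)
  next
    fix j assume j: "1 \<le> j" "j \<le> k" "fst (l,u) = Vl j" "full k (snd (l,u))"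
    then have f: "full k u" and l: "l = Vl j" by auto
    note fl = full_list[OF f]
    have "accepts_from (aut k) (vsrc k j, map Some (map the u)) (map (Pair 0) (drop j (map the u)))"
      using acc_V[OF k fl(4) j(2)] by (simp add: wd_def comp_def)
    then show ?thesis using fl(1) j l q by (intro exI[of _ "map (Pair 0) (drop j (map the u))"]) (auto simp: wd_def vsrc_def)
  next
    fix S assume S: "S \<subseteq> {..<k}" "fst (l,u) = Cl S" "full k (snd (l,u))"
    then have f: "full k u" and l: "l = Cl S" by auto
    have lu: "length u = k" using f by (simp add: full_def)
    show ?thesis
    proof (cases "S = {..<k}")
      case False
      then show ?thesis using q l S by (intro exI[of _ "[]"]) (simp add: acc_Nil LACC_C)
    next
      case True
      have "step (aut k) (Cl S, u) (0,0) (Sk, u)" using step_C[OF S(1) lu, of 0 0 Sk u] True by simp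
      moreover have "accepts_from (aut k) (Sk, u) []" by (simp add: acc_Nil)
      ultimately show ?thesis using q l by (intro exI[of _ "[(0,0)]"]) (auto simp: acc_Cons)
    qed
  next
    assume "fst (l,u) = Sk" "length (snd (l,u)) = k" "injv (snd (l,u))"
    then show ?thesis using q by (intro exI[of _ "[]"]) (simp add: acc_Nil)
  qed
qed

lemma cregs_CAnd: "cregs (CAnd a b) = cregs a \<union> cregs b" by simp

lemma conj_ok: "\<forall>r<k. CEq (Nxt r) (Cur r) \<in> conjuncts (CAnd X (ld k r0)) \<or> CEq (Nxt r) Dat \<in> conjuncts (CAnd X (ld k r0))"
  using conj_ld[of _ k r0] by auto
lemma conj_ok2: "\<forall>r<k. CEq (Nxt r) (Cur r) \<in> conjuncts (ld k r0) \<or> CEq (Nxt r) Dat \<in> conjuncts (ld k r0)"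
  using conj_ld[of _ k r0] by auto

lemma src_LOCS: "k \<ge> 1 \<Longrightarrow> S \<subseteq> {..<k} \<Longrightarrow> src k S \<in> LOCS k"
  using LOCS_intros(1)[of 0 k] LOCS_intros(2)[of S k] by (auto simp: src_def)

lemma vsrc_LOCS: "j < k \<Longrightarrow> vsrc k j \<in> LOCS k"
  using LOCS_intros(2)[of "{..<k}" k] LOCS_intros(3)[of j k] by (auto simp: vsrc_def)

lemma finite_EDG: "finite (EDG k)"
proof -
  have f1: "finite {(S,r). S \<subseteq> {..<k} \<and> r < k \<and> r \<notin> S}"
    by (rule finite_subset[of _ "Pow {..<k} \<times> {..<k}"]) auto
  have f2: "finite {(S,r). S \<subseteq> {..<k} \<and> S \<noteq> {..<k} \<and> r \<in> S}"
    by (rule finite_subset[of _ "Pow {..<k} \<times> {..<k}"]) auto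
  have f3: "finite {S. S \<subseteq> {..<k} \<and> S \<noteq> {..<k}}"
    by (rule finite_subset[of _ "Pow {..<k}"]) auto
  show ?thesis unfolding EDG_def P1_def P2_def P3_def P4_def P5_def P6_def P7_def P8_def
    using f1 f2 f3 by simp
qed

lemma wf_aut: assumes k: "k \<ge> 1" shows "wf_ra (aut k)"
proof -
  have fl: "finite (LOCS k)" unfolding LOCS_def by simp
  have il: "Rl 0 \<in> LOCS k" using LOCS_intros(1)[of 0 k] k by simp
  have al: "LACC k \<subseteq> LOCS k" using k unfolding LACC_def LOCS_def by auto
  have ed: "\<forall>(l, \<sigma>, \<phi>, l') \<in> EDG k. l \<in> LOCS k \<and> \<sigma> \<in> {0} \<and> l' \<in> LOCS k
         \<and> cregs \<phi> \<subseteq> {..<k}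
         \<and> (\<forall>r < k. CEq (Nxt r) (Cur r) \<in> conjuncts \<phi> \<or> CEq (Nxt r) Dat \<in> conjuncts \<phi>)"
  proof (intro ballI, clarify)
    fix l \<sigma> \<phi> l' assume e: "(l, \<sigma>, \<phi>, l') \<in> EDG k"
    have cf: "cregs (fresh k) \<subseteq> {..<k}" "\<And>r. cregs (ld k r) \<subseteq> {..<k}" by (rule cregs_fresh, rule cregs_ld)
    note simps = cregs_fresh cregs_ld
    from e[unfolded EDG_mem] show "l \<in> LOCS k \<and> \<sigma> \<in> {0} \<and> l' \<in> LOCS k
         \<and> cregs \<phi> \<subseteq> {..<k}
         \<and> (\<forall>r < k. CEq (Nxt r) (Cur r) \<in> conjuncts \<phi> \<or> CEq (Nxt r) Dat \<in> conjuncts \<phi>)"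
    proof (elim disjE)
      assume "(l, \<sigma>, \<phi>, l') \<in> P1 k"
      then obtain i where h: "\<sigma> = 0" "i < k" "l = Rl i" "\<phi> = CAnd (fresh k) (ld k i)" "l' = nextR k i"
        unfolding P1_mem by blast
      then show ?thesis using LOCS_intros(1,6)[of i k] conj_ok[of k "fresh k" i] by (simp add: simps)
    next
      assume "(l, \<sigma>, \<phi>, l') \<in> P2 k"
      then obtain i where h: "\<sigma> = 0" "i < k" "l = Rl i" "\<phi> = CAnd (CNot (fresh k)) (keep k)" "l' = Sk"
        unfolding P2_mem by blast
      then show ?thesis using LOCS_intros(1)[of i k] LOCS_intros(5) conj_ok[of k "CNot (fresh k)" k] by (simp add: simps)
    next
      assume "(l, \<sigma>, \<phi>, l') \<in> P3 k"
      then obtain S r where h: "\<sigma> = 0" "S \<subseteq> {..<k}" "r < k" "r \<notin> S" "l = src k S"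
        "\<phi> = CAnd (fresh k) (ld k r)" "l' = Ql (insert r S)" unfolding P3_mem by blast
      have "Ql (insert r S) \<in> LOCS k" using LOCS_intros(2)[of "insert r S" k] h by auto
      then show ?thesis using h src_LOCS[OF k h(2)] conj_ok[of k "fresh k" r] by (simp add: simps)
    next
      assume "(l, \<sigma>, \<phi>, l') \<in> P4 k"
      then obtain j where h: "\<sigma> = 0" "j < k" "l = vsrc k j" "\<phi> = CAnd (CEq Dat (Cur j)) (keep k)"
        "l' = Vl (Suc j)" unfolding P4_mem by blast
      then show ?thesis using vsrc_LOCS[of j k] LOCS_intros(3)[of "Suc j" k] conj_ok[of k "CEq Dat (Cur j)" k] by (simp add: simps)
    next
      assume "(l, \<sigma>, \<phi>, l') \<in> P5 k"
      then obtain S r where h: "\<sigma> = 0" "S \<subseteq> {..<k}" "r < k" "r \<notin> S" "l = Cl S"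
        "\<phi> = CAnd (CEq Dat (Cur r)) (keep k)" "l' = Cl (insert r S)" unfolding P5_mem by blast
      then show ?thesis using LOCS_intros(4)[of S k] LOCS_intros(4)[of "insert r S" k] conj_ok[of k "CEq Dat (Cur r)" k] by (simp add: simps)
    next
      assume "(l, \<sigma>, \<phi>, l') \<in> P6 k"
      then obtain S r where h: "\<sigma> = 0" "S \<subseteq> {..<k}" "r \<in> S" "l = Cl S"
        "\<phi> = CAnd (CEq Dat (Cur r)) (keep k)" "l' = Sk" unfolding P6_mem by blast
      then have "r < k" by auto
      then show ?thesis using h LOCS_intros(4)[of S k] LOCS_intros(5) conj_ok[of k "CEq Dat (Cur r)" k] by (simp add: simps)
    next
      assume "(l, \<sigma>, \<phi>, l') \<in> P7 k"
      then obtain S where h: "\<sigma> = 0" "S \<subseteq> {..<k}" "l = Cl S"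
        "\<phi> = CAnd (fresh k) (keep k)" "l' = Sk" unfolding P7_mem by blast
      then show ?thesis using LOCS_intros(4)[of S k] LOCS_intros(5) conj_ok[of k "fresh k" k] by (simp add: simps)
    next
      assume "(l, \<sigma>, \<phi>, l') \<in> P8 k"
      then have h: "\<sigma> = 0" "\<phi> = keep k" "l' = Sk" "l = Cl {..<k} \<or> l = Sk" unfolding P8_mem by blast+
      then show ?thesis using LOCS_intros(4)[of "{..<k}" k] LOCS_intros(5) conj_ok2[of k k] by (auto simp: simps)
    qed
  qed
  show ?thesis unfolding wf_ra_def using fl il al ed finite_EDG by simp
qed



definition Sx :: "nat \<Rightarrow> nat list \<Rightarrow> nat \<Rightarrow> nat set" where
  "Sx k xs i = {r. r < k \<and> xs!r < i}"
definition ux :: "nat list \<Rightarrow> nat \<Rightarrow> nat option list" where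
  "ux xs i = map (\<lambda>v. if v < i then Some v else None) xs"

lemma perm_facts: assumes "xs \<in> permutations_of_set {0..<k}"
  shows "distinct xs" "set xs = {0..<k}" "length xs = k"
proof -
  show d: "distinct xs" "set xs = {0..<k}" using permutations_of_setD[OF assms] by auto
  then show "length xs = k" using distinct_card[OF d(1)] by simp
qed

lemma shp_ux: assumes p: "xs \<in> permutations_of_set {0..<k}"
  shows "shp k (Sx k xs i) (ux xs i)"
proof -
  note pf = perm_facts[OF p]
  have "injv (ux xs i)" unfolding injv_def ux_def
  proof (intro allI impI)
    fix a b assume h: "a < length (map (\<lambda>v. if v < i then Some v else None) xs)"
      "b < length (map (\<lambda>v. if v < i then Some v else None) xs)" "a \<noteq> b"
      "map (\<lambda>v. if v < i then Some v else None) xs ! a \<noteq> None"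
    have "xs!a \<noteq> xs!b" using pf(1) h by (simp add: nth_eq_iff_index_eq)
    then show "map (\<lambda>v. if v < i then Some v else None) xs ! a \<noteq> map (\<lambda>v. if v < i then Some v else None) xs ! b"
      using h by auto
  qed
  then show ?thesis using pf(3) by (auto simp: shp_def Sx_def ux_def)
qed

lemma vals_ux: "i' \<in> vals (ux xs i) \<Longrightarrow> i' < i"
  by (auto simp: vals_def ux_def split: if_splits)

lemma reach_ux: assumes k: "k \<ge> 1" and p: "xs \<in> permutations_of_set {0..<k}"
  shows "i \<le> k \<Longrightarrow> (src k (Sx k xs i), ux xs i) \<in> succ_word (aut k) {init_state (aut k)} (map (Pair 0) [0..<i])"
proof (induction i)
  case 0
  note pf = perm_facts[OF p]
  have "Sx k xs 0 = {}" by (simp add: Sx_def)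
  moreover have "ux xs 0 = replicate k None" using pf(3) by (simp add: ux_def map_replicate_const)
  ultimately show ?case by (simp add: init_aut src_def)
next
  case (Suc i)
  note pf = perm_facts[OF p]
  have ik: "i < k" using Suc.prems by simp
  have "i \<in> set xs" using pf(2) ik by simp
  then obtain r where r: "r < k" "xs!r = i" using pf(3) by (auto simp: in_set_conv_nth)
  have rS: "r \<notin> Sx k xs i" using r by (simp add: Sx_def)
  have iv: "i \<notin> vals (ux xs i)" using vals_ux by blast
  have st: "step (aut k) (src k (Sx k xs i), ux xs i) (0,i) (Ql (insert r (Sx k xs i)), (ux xs i)[r:=Some i])"
    using step_src[OF k shp_ux[OF p] r(1) rS iv] .
  have uniq: "r' < k \<Longrightarrow> xs!r' = i \<longleftrightarrow> r' = r" for r'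
    using pf r by (auto simp: nth_eq_iff_index_eq)
  have S': "Sx k xs (Suc i) = insert r (Sx k xs i)"
  proof (rule set_eqI)
    fix x show "x \<in> Sx k xs (Suc i) \<longleftrightarrow> x \<in> insert r (Sx k xs i)"
      using uniq[of x] r by (auto simp: Sx_def less_Suc_eq)
  qed
  have U': "ux xs (Suc i) = (ux xs i)[r:=Some i]"
  proof (rule nth_equalityI)
    show "length (ux xs (Suc i)) = length ((ux xs i)[r := Some i])" by (simp add: ux_def)
    fix j assume "j < length (ux xs (Suc i))"
    then have j: "j < k" using pf(3) by (simp add: ux_def)
    show "ux xs (Suc i) ! j = (ux xs i)[r := Some i] ! j"
    proof (cases "j = r")
      case True then show ?thesis using r pf(3) by (simp add: ux_def)
    next
      case False
      then have "xs!j \<noteq> i" using uniq j by blast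
      then show ?thesis using False j pf(3) by (auto simp: ux_def nth_list_update)
    qed
  qed
  have "src k (Sx k xs (Suc i)) = Ql (insert r (Sx k xs i))" using S' by (simp add: src_def)
  then have "(src k (Sx k xs (Suc i)), ux xs (Suc i)) \<in> succ (aut k) (succ_word (aut k) {init_state (aut k)} (map (Pair 0) [0..<i])) (0,i)"
    using st Suc.IH Suc.prems U' unfolding succ_def by auto
  then show ?case by (simp add: succ_word_snoc)
qed

lemma perm_in_config: assumes k: "k \<ge> 1" and p: "xs \<in> permutations_of_set {0..<k}"
  shows "(Ql {..<k}, map Some xs) \<in> succ_word (aut k) {init_state (aut k)} (map (Pair 0) [0..<k])"
proof -
  note pf = perm_facts[OF p]
  have "Sx k xs k = {..<k}" using pf by (auto simp: Sx_def)
  moreover have "ux xs k = map Some xs"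
  proof -
    have "\<forall>v\<in>set xs. v < k" using pf by auto
    then show ?thesis by (auto simp: ux_def)
  qed
  moreover have "src k {..<k} = Ql {..<k}" using k by (auto simp: src_def lessThan_empty_iff)
  moreover have "(src k (Sx k xs k), ux xs k) \<in> succ_word (aut k) {init_state (aut k)} (map (Pair 0) [0..<k])"
    using reach_ux[OF k p, of k] by simp
  ultimately show ?thesis by (simp only:)
qed

lemma config_card: assumes k: "k \<ge> 1"
  shows "ecard {q \<in> succ_word (aut k) {init_state (aut k)} (map (Pair 0) [0..<k]). fst q = Ql {..<k}} \<ge> enat (fact k)"
proof -
  let ?C = "{q \<in> succ_word (aut k) {init_state (aut k)} (map (Pair 0) [0..<k]). fst q = Ql {..<k}}"
  let ?f = "\<lambda>xs. (Ql {..<k}, map Some xs)"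
  have sub: "?f ` permutations_of_set {0..<k} \<subseteq> ?C" using perm_in_config[OF k] by auto
  have inj: "inj_on ?f (permutations_of_set {0..<k})" by (auto simp: inj_on_def)
  have cp: "card (?f ` permutations_of_set {0..<k}) = fact k"
    using card_image[OF inj] by simp
  show ?thesis
  proof (cases "finite ?C")
    case True
    have "card (?f ` permutations_of_set {0..<k}) \<le> card ?C" using card_mono[OF True sub] .
    then show ?thesis using True cp by (simp add: ecard_def)
  next
    case False then show ?thesis by (simp add: ecard_def)
  qed
qed

theorem lemma2:
  fixes k :: nat
  assumes "k \<ge> 1"
  shows "(\<exists>(A :: (nat, nat) ra) C l.
            k_URA k A \<and> clean A \<and> universal A \<and> (\<exists>\<sigma>. alph A = {\<sigma>})
            \<and> reachable_config A C \<and> ecard {q \<in> C. fst q = l} \<ge> enat (fact k))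
         \<and> N k \<ge> enat (fact k)"
proof -
  have k: "k \<ge> 1" by (fact assms)
  let ?A = "aut k"
  let ?C = "succ_word (aut k) {init_state (aut k)} (map (Pair 0) [0..<k])"
  let ?l = "Ql {..<k}"
  have pres: "\<And>q a q'. Inv k q \<Longrightarrow> fst a \<in> alph ?A \<Longrightarrow> step ?A q a q' \<Longrightarrow> Inv k q'"
    using Inv_step[OF k] by blast
  have dt: "\<And>q a q1 q2 w. Inv k q \<Longrightarrow> fst a \<in> alph ?A \<Longrightarrow> step ?A q a q1 \<Longrightarrow> step ?A q a q2
              \<Longrightarrow> accepts_from ?A q1 w \<Longrightarrow> accepts_from ?A q2 w \<Longrightarrow> q1 = q2"
    using det[OF k] by blast
  have "unambiguous ?A" unfolding unambiguous_def
  proof (intro ballI allI impI)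
    fix w qs qs' assume w: "w \<in> words ?A" and r1: "accepting_run ?A (init_state ?A) w qs"
      and r2: "accepting_run ?A (init_state ?A) w qs'"
    show "qs = qs'"
      apply (rule uniq_runs[where I="Inv k" and A="aut k" and q="init_state (aut k)" and w=w])
      using pres dt Inv_init[OF k] w r1 r2 by blast+
  qed
  then have ura: "k_URA k ?A"
    unfolding k_URA_def k_RA_def using wf_aut[OF k] by simp
  have reachI: "Inv k q" if "reachable_state ?A q" for q
    apply (rule reach_inv[where I="Inv k" and A="aut k"])
    using Inv_init[OF k] pres that by blast+
  have cl: "clean ?A"
    unfolding clean_def
  proof (intro allI impI)
    fix q assume "reachable_state ?A q"
    then have I: "Inv k q" by (rule reachI)
    have A: "\<exists>w\<in>words ?A. accepts_from ?A q w" using Inv_nonempty[OF k I] words_aut by blast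
    have iv: "injv (snd q)" using Inv_injv[OF I] by simp
    have B: "\<forall>i<length (snd q). \<forall>j<length (snd q). \<forall>n::nat. i \<noteq> j \<longrightarrow> snd q ! i = Some n \<longrightarrow> snd q ! j \<noteq> Some n"
      using iv unfolding injv_def by (metis option.distinct(1))
    show "(\<exists>w\<in>words ?A. accepts_from ?A q w) \<and> (\<forall>i<length (snd q). \<forall>j<length (snd q). \<forall>n::nat. i \<noteq> j \<longrightarrow> snd q ! i = Some n \<longrightarrow> snd q ! j \<noteq> Some n)"
      using A B by blast
  qed
  have un: "universal ?A"
    unfolding universal_def lang_def using univ[OF k] words_aut by blast
  have rc: "reachable_config ?A ?C"
    unfolding reachable_config_def words_aut[symmetric, of _ k] by (intro bexI[of _ "map (Pair 0) [0..<k]"]) (auto simp: words_aut wd_def)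
  have ec: "ecard {q \<in> ?C. fst q = ?l} \<ge> enat (fact k)" by (rule config_card[OF k])
  have part1: "k_URA k ?A \<and> clean ?A \<and> universal ?A \<and> (\<exists>\<sigma>. alph ?A = {\<sigma>})
            \<and> reachable_config ?A ?C \<and> ecard {q \<in> ?C. fst q = ?l} \<ge> enat (fact k)"
    using ura cl un rc ec by simp
  have mem: "(?A, ?C, ?l) \<in> {(A, C, l). k_URA k (A :: (nat, nat) ra) \<and> clean A \<and> universal A
                \<and> reachable_config A C}" using ura cl un rc by simp
  have "ecard {q \<in> ?C. fst q = ?l} \<le> N k"
    unfolding N_def using SUP_upper[OF mem, of "\<lambda>x. case x of (A, C, l) \<Rightarrow> ecard {q \<in> C. fst q = l}"] by simp
  then have "N k \<ge> enat (fact k)" using ec by (rule order_trans[rotated])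
  then show ?thesis using part1 by blast
qed


end
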